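(* Let $n\ge2$, let $P$ be the $n\times n$ grid MDP described in the context (horizon $H=2n-1$), and let $\mathbf 1$ denote the mean reward function with $r_h(s,a)=1$ for all $(h,s,a)$. Then there exist absolute constants $c_1,c_2>0$ (independent of $n$ and $L$) such that for all $L\in[H]$, $$\frac{c_1}{L}\le CR^L(P,\mathbf 1)\le\frac{c_2}{L}.$$
   Context: Grid MDP: the states are $s_{i,j}$, $i,j\in[n]$, where $i$ is the column (from the left) and $j$ is the row (from the bottom). There are two actions, "right" ($i\mapsto i+1$) and "up" ($j\mapsto j+1$), and all transitions are deterministic. The agent starts at $s_{1,1}$. At a state with $i<n$ and $j<n$, both moves are available. On the top row $j=n$ with $i<n$, both actions move right. On the rightmost column $i=n$ with $j<n$, both actions move up. The state $s_{n,n}$ is reached at step $2n-1=H$, and the episode ends after one action there. General framework: episodic tabular MDP with finite state space $\mathcal S$ ($|\mathcal S|=S$), finite action space $\mathcal A$ ($|\mathcal A|=A$), horizon $H$ and random non-negative rewards $R_h(s,a)$, $(h,s,a)\in\mathcal X=[H]\times\mathcal S\times\mathcal A$. Rewards are drawn before the interaction. The reward vectors $\mathcal R_h$ are independent across steps (possibly correlated within a step) and independent of transitions. $r_h(s,a)=\mathbb E[R_h(s,a)]$, and $\mathcal D(r)$ is the set of such reward distributions with means $r$. An $L$-lookahead policy chooses $a_h$ based on $h$, $s_h$ and the rewards $(\mathcal R_t)_{h\le t\le\min(h+L-1,H)}$. $V^{L,*}$ is the optimal expected total reward over such policies, and $L=0$ corresponds to Markovian policies. $CR^L(P,r)=\inf_{\mathcal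 D(r)}V^{0,*}/V^{L,*}$, with division by zero equal to $+\infty$. *)

theory Defs
  imports "HOL-Probability.Probability"
begin

datatype act = Right | Up

text \<open>States are pairs (i,j) with i the column and j the row, both in {1..n}.
  Horizon H = 2n - 1.\<close>

definition horizon :: "nat \<Rightarrow> nat" where
  "horizon n = 2 * n - 1"

definition grid_step :: "nat \<Rightarrow> nat \<times> nat \<Rightarrow> act \<Rightarrow> nat \<times> nat" where
  "grid_step n s a = (case s of (i, j) \<Rightarrow>
     if i < n \<and> j < n then (case a of Right \<Rightarrow> (i + 1, j) | Up \<Rightarrow> (i, j + 1))
     else if j = n \<and> i < n then (i + 1, j)
     else if i = n \<and> j < n then (i, j + 1)
     else (i, j))"

definition grid_X :: "nat \<Rightarrow> ((nat \<times> nat) \<times> act) set" where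
  "grid_X n = ({1..n} \<times> {1..n}) \<times> UNIV"

definition rew_space :: "nat \<Rightarrow> (((nat \<times> nat) \<times> act) \<Rightarrow> real) measure" where
  "rew_space n = Pi\<^sub>M (grid_X n) (\<lambda>_. borel)"

text \<open>D(r): families of per-step reward distributions (steps independent, arbitrary
  correlation within a step), nonnegative rewards, with means r.\<close>
definition reward_dists ::
  "nat \<Rightarrow> (nat \<Rightarrow> nat \<times> nat \<Rightarrow> act \<Rightarrow> real) \<Rightarrow>
     (nat \<Rightarrow> (((nat \<times> nat) \<times> act) \<Rightarrow> real) measure) set" where
  "reward_dists n r = {\<mu>. \<forall>h\<in>{1..horizon n}.
      prob_space (\<mu> h) \<and> sets (\<mu> h) = sets (rew_space n) \<and>
      (AE f in \<mu> h. \<forall>x\<in>grid_X n. 0 \<le> f x) \<and>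
      (\<forall>s a. (s, a) \<in> grid_X n \<longrightarrow>
          integrable (\<mu> h) (\<lambda>f. f (s, a)) \<and> (\<integral>f. f (s, a) \<partial>\<mu> h) = r h s a)}"

definition rew_seq ::
  "nat \<Rightarrow> (nat \<Rightarrow> (((nat \<times> nat) \<times> act) \<Rightarrow> real) measure) \<Rightarrow>
     (nat \<Rightarrow> ((nat \<times> nat) \<times> act) \<Rightarrow> real) measure" where
  "rew_seq n \<mu> = Pi\<^sub>M {1..horizon n} \<mu>"

type_synonym rseq = "nat \<Rightarrow> ((nat \<times> nat) \<times> act) \<Rightarrow> real"
type_synonym policy = "nat \<Rightarrow> nat \<times> nat \<Rightarrow> rseq \<Rightarrow> act"

text \<open>State trajectory: grid_traj n pi w k is the state at step k+1.\<close>
primrec grid_traj :: "nat \<Rightarrow> policy \<Rightarrow> rseq \<Rightarrow> nat \<Rightarrow> nat \<times> nat" where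
  "grid_traj n \<pi> \<omega> 0 = (1, 1)"
| "grid_traj n \<pi> \<omega> (Suc k) =
     grid_step n (grid_traj n \<pi> \<omega> k) (\<pi> (Suc k) (grid_traj n \<pi> \<omega> k) \<omega>)"

text \<open>L-lookahead (deterministic) policies: the action at step h, state s, is a measurable
  function of the rewards R_h, ..., R_{min(h+L-1,H)} only. L = 0 gives Markovian policies.\<close>
definition lookahead_policies ::
  "nat \<Rightarrow> nat \<Rightarrow> (nat \<Rightarrow> (((nat \<times> nat) \<times> act) \<Rightarrow> real) measure) \<Rightarrow> policy set" where
  "lookahead_policies n L \<mu> = {\<pi>. \<forall>h s.
      (\<pi> h s) \<in> measurable (rew_seq n \<mu>) (count_space UNIV) \<and>
      (\<forall>\<omega>\<in>space (rew_seq n \<mu>). \<forall>\<omega>'\<in>space (rew_seq n \<mu>).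
          (\<forall>t\<in>{h..min (h + L - 1) (horizon n)}. \<omega> t = \<omega>' t) \<longrightarrow> \<pi> h s \<omega> = \<pi> h s \<omega>')}"

definition policy_value ::
  "nat \<Rightarrow> (nat \<Rightarrow> (((nat \<times> nat) \<times> act) \<Rightarrow> real) measure) \<Rightarrow> policy \<Rightarrow> ennreal" where
  "policy_value n \<mu> \<pi> = (\<integral>\<^sup>+ \<omega>. ennreal (\<Sum>h\<in>{1..horizon n}.
       \<omega> h (grid_traj n \<pi> \<omega> (h - 1), \<pi> h (grid_traj n \<pi> \<omega> (h - 1)) \<omega>)) \<partial>rew_seq n \<mu>)"

definition opt_value ::
  "nat \<Rightarrow> nat \<Rightarrow> (nat \<Rightarrow> (((nat \<times> nat) \<times> act) \<Rightarrow> real) measure) \<Rightarrow> ennreal" where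
  "opt_value n L \<mu> = (SUP \<pi>\<in>lookahead_policies n L \<mu>. policy_value n \<mu> \<pi>)"

definition cr_div :: "ennreal \<Rightarrow> ennreal \<Rightarrow> ennreal" where
  "cr_div a b = (if b = 0 then \<top> else a / b)"

definition grid_CR :: "nat \<Rightarrow> nat \<Rightarrow> (nat \<Rightarrow> nat \<times> nat \<Rightarrow> act \<Rightarrow> real) \<Rightarrow> ennreal" where
  "grid_CR n L r = (INF \<mu>\<in>reward_dists n r. cr_div (opt_value n 0 \<mu>) (opt_value n L \<mu>))"

end

theory Submission
  imports Defs
begin

lemma UNIV_act: "(UNIV :: act set) = {Right, Up}"
  using act.exhaust by auto

lemma finite_grid_X[simp]: "finite (grid_X n)"
  unfolding grid_X_def by (simp add: UNIV_act)

lemma grid_step_fst: "fst (grid_step n s a) = fst s \<or> fst (grid_step n s a) = Suc (fst s)"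
  by (auto simp: grid_step_def split: prod.splits act.splits)

lemma traj_inv:
  assumes "1 \<le> n" "k \<le> 2*n - 2"
  shows "1 \<le> fst (grid_traj n \<pi> \<omega> k) \<and> fst (grid_traj n \<pi> \<omega> k) \<le> n \<and>
         1 \<le> snd (grid_traj n \<pi> \<omega> k) \<and> snd (grid_traj n \<pi> \<omega> k) \<le> n \<and>
         fst (grid_traj n \<pi> \<omega> k) + snd (grid_traj n \<pi> \<omega> k) = k + 2"
  using assms(2)
proof (induction k)
  case 0 then show ?case using assms(1) by simp
next
  case (Suc k)
  obtain i j where ij: "grid_traj n \<pi> \<omega> k = (i, j)" by (cases "grid_traj n \<pi> \<omega> k")
  from Suc ij have h: "1 \<le> i" "i \<le> n" "1 \<le> j" "j \<le> n" "i + j = k + 2" by auto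
  have "i < n \<or> j < n" using h Suc.prems by linarith
  then show ?case using h ij
    by (auto simp: grid_step_def split: act.splits)
qed

lemma traj_col_mono:
  "fst (grid_traj n \<pi> \<omega> k) \<le> fst (grid_traj n \<pi> \<omega> (k + d)) \<and>
   fst (grid_traj n \<pi> \<omega> (k + d)) \<le> fst (grid_traj n \<pi> \<omega> k) + d"
proof (induction d)
  case 0 then show ?case by simp
next
  case (Suc d)
  have "fst (grid_traj n \<pi> \<omega> (Suc (k + d))) = fst (grid_traj n \<pi> \<omega> (k + d)) \<or>
        fst (grid_traj n \<pi> \<omega> (Suc (k + d))) = Suc (fst (grid_traj n \<pi> \<omega> (k + d)))"
    by (simp add: grid_step_fst)
  then show ?case using Suc by auto
qed

lemma ennreal_sum_le: "ennreal (\<Sum>x\<in>A. f x) \<le> (\<Sum>x\<in>A. ennreal (f x))"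
proof (induction A rule: infinite_finite_induct)
  case (insert x F)
  have "ennreal (f x + sum f F) \<le> ennreal (max (f x) 0 + max (sum f F) 0)"
    by (intro ennreal_leI) auto
  also have "\<dots> = ennreal (f x) + ennreal (sum f F)"
    by (subst ennreal_plus) (auto simp: max.commute)
  also have "\<dots> \<le> ennreal (f x) + (\<Sum>x\<in>F. ennreal (f x))"
    using insert by (intro add_mono) auto
  finally show ?case using insert by simp
qed auto

lemma pol_meas: "\<pi> \<in> lookahead_policies n L \<mu> \<Longrightarrow> \<pi> h s \<in> measurable (rew_seq n \<mu>) (count_space UNIV)"
  unfolding lookahead_policies_def by blast

lemma pol_dep: "\<pi> \<in> lookahead_policies n L \<mu> \<Longrightarrow> \<omega> \<in> space (rew_seq n \<mu>) \<Longrightarrow> \<omega>' \<in> space (rew_seq n \<mu>)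
  \<Longrightarrow> (\<forall>t\<in>{h..min (h + L - 1) (horizon n)}. \<omega> t = \<omega>' t) \<Longrightarrow> \<pi> h s \<omega> = \<pi> h s \<omega>'"
  unfolding lookahead_policies_def by blast

lemma traj_dep:
  assumes pol: "\<pi> \<in> lookahead_policies n L \<mu>"
    and w: "\<omega> \<in> space (rew_seq n \<mu>)" "\<omega>' \<in> space (rew_seq n \<mu>)"
    and agree: "\<forall>t\<in>{1..horizon n}. t < k + L \<longrightarrow> \<omega> t = \<omega>' t"
  shows "grid_traj n \<pi> \<omega> k = grid_traj n \<pi> \<omega>' k"
  using agree
proof (induction k)
  case 0 then show ?case by simp
next
  case (Suc k)
  have IH: "grid_traj n \<pi> \<omega> k = grid_traj n \<pi> \<omega>' k" using Suc by auto
  have "\<pi> (Suc k) (grid_traj n \<pi> \<omega> k) \<omega> = \<pi> (Suc k) (grid_traj n \<pi> \<omega> k) \<omega>'"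
    using pol_dep[OF pol w] Suc.prems by auto
  then show ?case using IH by simp
qed

lemma traj_meas:
  assumes pol: "\<pi> \<in> lookahead_policies n L \<mu>"
  shows "(\<lambda>\<omega>. grid_traj n \<pi> \<omega> k) \<in> measurable (rew_seq n \<mu>) (count_space UNIV)"
proof (induction k)
  case 0 then show ?case by simp
next
  case (Suc k)
  have m: "(\<lambda>\<omega>. grid_step n s (\<pi> (Suc k) s \<omega>)) \<in> measurable (rew_seq n \<mu>) (count_space UNIV)" for s
  proof -
    have "\<pi> (Suc k) s \<in> measurable (rew_seq n \<mu>) (count_space UNIV)"
      using pol_meas[OF pol] .
    then show ?thesis
      by (rule measurable_compose) simp
  qed
  show ?case
    using measurable_compose_countable'[where f="\<lambda>s \<omega>. grid_step n s (\<pi> (Suc k) s \<omega>)",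
        OF m Suc] by simp
qed

lemma rd_prob: "\<mu> \<in> reward_dists n r \<Longrightarrow> t \<in> {1..horizon n} \<Longrightarrow> prob_space (\<mu> t)"
  unfolding reward_dists_def by blast
lemma rd_sets: "\<mu> \<in> reward_dists n r \<Longrightarrow> t \<in> {1..horizon n} \<Longrightarrow> sets (\<mu> t) = sets (rew_space n)"
  unfolding reward_dists_def by blast
lemma rd_AE: "\<mu> \<in> reward_dists n r \<Longrightarrow> t \<in> {1..horizon n} \<Longrightarrow> AE f in \<mu> t. \<forall>x\<in>grid_X n. 0 \<le> f x"
  unfolding reward_dists_def by blast
lemma rd_int: "\<mu> \<in> reward_dists n r \<Longrightarrow> t \<in> {1..horizon n} \<Longrightarrow> (s, a) \<in> grid_X n \<Longrightarrow>
   integrable (\<mu> t) (\<lambda>f. f (s, a)) \<and> (\<integral>f. f (s, a) \<partial>\<mu> t) = r t s a"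
  unfolding reward_dists_def by blast

lemma rd_coord_meas:
  assumes "\<mu> \<in> reward_dists n r" "t \<in> {1..horizon n}" "p \<in> grid_X n"
  shows "(\<lambda>f. f p) \<in> borel_measurable (\<mu> t)"
proof -
  have "(\<lambda>f. f p) \<in> borel_measurable (rew_space n)"
    unfolding rew_space_def using assms(3) by (rule measurable_component_singleton)
  then show ?thesis using measurable_cong_sets[OF rd_sets[OF assms(1,2)] refl] by blast
qed

lemma rd_nn_one:
  assumes "\<mu> \<in> reward_dists n (\<lambda>_ _ _. 1)" "t \<in> {1..horizon n}" "p \<in> grid_X n"
  shows "(\<integral>\<^sup>+f. ennreal (f p) \<partial>\<mu> t) = 1"
proof -
  obtain s a where p: "p = (s, a)" by (cases p)
  have "AE f in \<mu> t. 0 \<le> f p"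
    by (rule AE_mp[OF rd_AE[OF assms(1,2)]]) (intro AE_I2, use assms(3) in auto)
  then show ?thesis
    using rd_int[OF assms(1,2), of s a] assms(3) p by (simp add: nn_integral_eq_integral)
qed

lemma rew_seq_space: "\<mu> \<in> reward_dists n r \<Longrightarrow> t \<in> {1..horizon n} \<Longrightarrow> \<omega> \<in> space (rew_seq n \<mu>) \<Longrightarrow> \<omega> t \<in> space (\<mu> t)"
  unfolding rew_seq_def by (auto simp: space_PiM)

lemma rs_coord_meas:
  assumes "\<mu> \<in> reward_dists n r" "t \<in> {1..horizon n}" "p \<in> grid_X n"
  shows "(\<lambda>\<omega>. \<omega> t p) \<in> borel_measurable (rew_seq n \<mu>)"
proof -
  have "(\<lambda>\<omega>. \<omega> t) \<in> measurable (rew_seq n \<mu>) (\<mu> t)"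
    unfolding rew_seq_def using assms(2) by (rule measurable_component_singleton)
  from measurable_compose[OF this rd_coord_meas[OF assms]] show ?thesis .
qed

lemma fub:
  assumes \<mu>: "\<mu> \<in> reward_dists n (\<lambda>_ _ _. 1)" and h: "h \<in> {1..horizon n}"
    and c: "c \<in> measurable (rew_seq n \<mu>) (count_space UNIV)"
    and dep: "\<And>\<omega> \<omega>'. \<omega> \<in> space (rew_seq n \<mu>) \<Longrightarrow> \<omega>' \<in> space (rew_seq n \<mu>) \<Longrightarrow>
        (\<forall>t\<in>{1..horizon n}-{h}. \<omega> t = \<omega>' t) \<Longrightarrow> c \<omega> = c \<omega>'"
    and Bsub: "\<And>v. Bf v \<subseteq> grid_X n"
  shows "(\<integral>\<^sup>+\<omega>. (\<Sum>p\<in>Bf (c \<omega>). ennreal (\<omega> h p)) \<partial>rew_seq n \<mu>)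
       = (\<integral>\<^sup>+\<omega>. of_nat (card (Bf (c \<omega>))) \<partial>rew_seq n \<mu>)"
proof -
  let ?I = "{1..horizon n}"
  define M' where "M' t = (if t \<in> ?I then \<mu> t else \<mu> h)" for t
  have prob: "prob_space (M' t)" for t
    unfolding M'_def using rd_prob[OF \<mu>] h by auto
  interpret P: product_prob_space M' UNIV
    unfolding product_prob_space_def product_prob_space_axioms_def product_sigma_finite_def
    using prob by (auto intro: prob_space_imp_sigma_finite)
  have insI: "insert h (?I - {h}) = ?I" using h by auto
  have eq: "rew_seq n \<mu> = PiM (insert h (?I - {h})) M'"
    unfolding rew_seq_def insI by (rule PiM_cong) (auto simp: M'_def)
  define G where "G \<omega> = (\<Sum>p\<in>Bf (c \<omega>). ennreal (\<omega> h p))" for \<omega> :: rseq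
  define K where "K \<omega> = (of_nat (card (Bf (c \<omega>))) :: ennreal)" for \<omega> :: rseq
  have Geq: "G \<omega> = (\<Sum>p\<in>grid_X n. if p \<in> Bf (c \<omega>) then ennreal (\<omega> h p) else 0)" for \<omega>
    unfolding G_def using Bsub[of "c \<omega>"] by (simp add: sum.inter_restrict[symmetric] Int_absorb1)
  have Gm: "G \<in> borel_measurable (rew_seq n \<mu>)"
    unfolding Geq
  proof (intro borel_measurable_sum)
    fix p assume p: "p \<in> grid_X n"
    have pr: "Measurable.pred (rew_seq n \<mu>) (\<lambda>\<omega>. p \<in> Bf (c \<omega>))"
      using measurable_compose[OF c, where g="\<lambda>v. p \<in> Bf v" and L="count_space UNIV"] by simp
    show "(\<lambda>\<omega>. if p \<in> Bf (c \<omega>) then ennreal (\<omega> h p) else 0) \<in> borel_measurable (rew_seq n \<mu>)"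
      apply (rule measurable_If[OF _ measurable_const])
      apply (rule measurable_compose[OF rs_coord_meas[OF \<mu> h p] measurable_ennreal])
      apply simp
      by (rule pr[unfolded pred_def])
  qed
  have Km: "K \<in> borel_measurable (rew_seq n \<mu>)"
    unfolding K_def by (rule measurable_compose[OF c]) simp
  obtain y0 where y0: "y0 \<in> space (M' h)"
    using prob_space.not_empty[OF prob[of h]] by auto
  have spI: "x(h := y) \<in> space (rew_seq n \<mu>)"
    if x: "x \<in> space (PiM (?I - {h}) M')" and y: "y \<in> space (M' h)" for x y
  proof -
    have "x(h := y) \<in> Pi\<^sub>E (insert h (?I - {h})) (\<lambda>i. space (M' i))"
      by (rule PiE_fun_upd[where T="\<lambda>i. space (M' i)", OF y]) (use x in \<open>simp add: space_PiM\<close>)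
    then show ?thesis unfolding eq space_PiM .
  qed
  have cx: "c (x(h := y)) = c (x(h := y0))"
    if x: "x \<in> space (PiM (?I - {h}) M')" and y: "y \<in> space (M' h)" for x y
    by (rule dep[OF spI[OF x y] spI[OF x y0]]) auto
  have "(\<integral>\<^sup>+\<omega>. G \<omega> \<partial>rew_seq n \<mu>) =
     (\<integral>\<^sup>+ x. (\<integral>\<^sup>+ y. G (x(h := y)) \<partial>(M' h)) \<partial>(PiM (?I - {h}) M'))"
    using Gm unfolding eq by (intro P.product_nn_integral_insert) auto
  also have "\<dots> = (\<integral>\<^sup>+ x. K (x(h := y0)) \<partial>(PiM (?I - {h}) M'))"
  proof (rule nn_integral_cong)
    fix x assume x: "x \<in> space (PiM (?I - {h}) M')"
    have "(\<integral>\<^sup>+ y. G (x(h := y)) \<partial>(M' h)) = (\<integral>\<^sup>+ y. (\<Sum>p\<in>Bf (c (x(h := y0))). ennreal (y p)) \<partial>(M' h))"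
      by (rule nn_integral_cong) (simp add: G_def cx[OF x])
    also have "\<dots> = (\<Sum>p\<in>Bf (c (x(h := y0))). (\<integral>\<^sup>+ y. ennreal (y p) \<partial>(M' h)))"
    proof (rule nn_integral_sum)
      fix p assume "p \<in> Bf (c (x(h := y0)))"
      then have p: "p \<in> grid_X n" using Bsub by auto
      have M'h: "M' h = \<mu> h" using h by (simp add: M'_def)
      show "(\<lambda>y. ennreal (y p)) \<in> borel_measurable (M' h)"
        unfolding M'h by (rule measurable_compose[OF rd_coord_meas[OF \<mu> h p] measurable_ennreal])
    qed
    also have "\<dots> = K (x(h := y0))"
    proof -
      have "(\<Sum>p\<in>Bf (c (x(h := y0))). (\<integral>\<^sup>+ y. ennreal (y p) \<partial>(M' h))) = (\<Sum>p\<in>Bf (c (x(h := y0))). 1)"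
      proof (intro sum.cong refl)
        fix p assume "p \<in> Bf (c (x(h := y0)))"
        then have "p \<in> grid_X n" using Bsub by blast
        then show "(\<integral>\<^sup>+ y. ennreal (y p) \<partial>(M' h)) = 1"
          using h rd_nn_one[OF \<mu> h] by (simp add: M'_def)
      qed
      then show ?thesis by (simp add: K_def)
    qed
    finally show "(\<integral>\<^sup>+ y. G (x(h := y)) \<partial>(M' h)) = K (x(h := y0))" .
  qed
  also have "\<dots> = (\<integral>\<^sup>+ x. (\<integral>\<^sup>+ y. K (x(h := y)) \<partial>(M' h)) \<partial>(PiM (?I - {h}) M'))"
  proof (rule nn_integral_cong)
    fix x assume x: "x \<in> space (PiM (?I - {h}) M')"
    have "(\<integral>\<^sup>+ y. K (x(h := y)) \<partial>(M' h)) = (\<integral>\<^sup>+ y. K (x(h := y0)) \<partial>(M' h))"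
      by (rule nn_integral_cong) (simp add: K_def cx[OF x])
    also have "\<dots> = K (x(h := y0))"
      using prob_space.emeasure_space_1[OF prob[of h]] by simp
    finally show "K (x(h := y0)) = (\<integral>\<^sup>+ y. K (x(h := y)) \<partial>(M' h))" by simp
  qed
  also have "\<dots> = (\<integral>\<^sup>+\<omega>. K \<omega> \<partial>rew_seq n \<mu>)"
    using Km unfolding eq by (intro P.product_nn_integral_insert[symmetric]) auto
  finally show ?thesis unfolding G_def K_def .
qed

lemma rs_prob: "\<mu> \<in> reward_dists n r \<Longrightarrow> prob_space (rew_seq n \<mu>)"
  unfolding rew_seq_def by (rule prob_space_PiM) (rule rd_prob)

lemma G_meas:
  assumes \<mu>: "\<mu> \<in> reward_dists n r" and h: "h \<in> {1..horizon n}"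
    and c: "c \<in> measurable (rew_seq n \<mu>) (count_space UNIV)"
    and Bsub: "\<And>v. Bf v \<subseteq> grid_X n"
  shows "(\<lambda>\<omega>. \<Sum>p\<in>Bf (c \<omega>). ennreal (\<omega> h p)) \<in> borel_measurable (rew_seq n \<mu>)"
proof -
  have Geq: "(\<Sum>p\<in>Bf (c \<omega>). ennreal (\<omega> h p)) = (\<Sum>p\<in>grid_X n. if p \<in> Bf (c \<omega>) then ennreal (\<omega> h p) else 0)" for \<omega>
    using Bsub[of "c \<omega>"] by (simp add: sum.inter_restrict[symmetric] Int_absorb1)
  show ?thesis
    unfolding Geq
  proof (intro borel_measurable_sum)
    fix p assume p: "p \<in> grid_X n"
    have pr: "Measurable.pred (rew_seq n \<mu>) (\<lambda>\<omega>. p \<in> Bf (c \<omega>))"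
      using measurable_compose[OF c, where g="\<lambda>v. p \<in> Bf v" and L="count_space UNIV"] by simp
    show "(\<lambda>\<omega>. if p \<in> Bf (c \<omega>) then ennreal (\<omega> h p) else 0) \<in> borel_measurable (rew_seq n \<mu>)"
      apply (rule measurable_If[OF _ measurable_const])
      apply (rule measurable_compose[OF rs_coord_meas[OF \<mu> h p] measurable_ennreal])
      apply simp
      by (rule pr[unfolded pred_def])
  qed
qed

lemma value_le:
  assumes \<mu>: "\<mu> \<in> reward_dists n (\<lambda>_ _ _. 1)"
    and c: "\<And>h. h \<in> {1..horizon n} \<Longrightarrow> c h \<in> measurable (rew_seq n \<mu>) (count_space UNIV)"
    and dep: "\<And>h \<omega> \<omega>'. h \<in> {1..horizon n} \<Longrightarrow> \<omega> \<in> space (rew_seq n \<mu>) \<Longrightarrow> \<omega>' \<in> space (rew_seq n \<mu>) \<Longrightarrow>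
        (\<forall>t\<in>{1..horizon n}-{h}. \<omega> t = \<omega>' t) \<Longrightarrow> c h \<omega> = c h \<omega>'"
    and Bsub: "\<And>h v. Bf h v \<subseteq> grid_X n"
    and Bcard: "\<And>h v. h \<in> {1..horizon n} \<Longrightarrow> card (Bf h v) \<le> K"
    and mem: "\<And>h \<omega>. h \<in> {1..horizon n} \<Longrightarrow> \<omega> \<in> space (rew_seq n \<mu>) \<Longrightarrow>
        (grid_traj n \<pi> \<omega> (h - 1), \<pi> h (grid_traj n \<pi> \<omega> (h - 1)) \<omega>) \<in> Bf h (c h \<omega>)"
  shows "policy_value n \<mu> \<pi> \<le> of_nat (K * horizon n)"
proof -
  let ?I = "{1..horizon n}"
  interpret P: prob_space "rew_seq n \<mu>" by (rule rs_prob[OF \<mu>])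
  have "policy_value n \<mu> \<pi> \<le> (\<integral>\<^sup>+\<omega>. (\<Sum>h\<in>?I. (\<Sum>p\<in>Bf h (c h \<omega>). ennreal (\<omega> h p))) \<partial>rew_seq n \<mu>)"
    unfolding policy_value_def
  proof (rule nn_integral_mono)
    fix \<omega> assume w: "\<omega> \<in> space (rew_seq n \<mu>)"
    have "ennreal (\<Sum>h\<in>?I. \<omega> h (grid_traj n \<pi> \<omega> (h - 1), \<pi> h (grid_traj n \<pi> \<omega> (h - 1)) \<omega>))
       \<le> (\<Sum>h\<in>?I. ennreal (\<omega> h (grid_traj n \<pi> \<omega> (h - 1), \<pi> h (grid_traj n \<pi> \<omega> (h - 1)) \<omega>)))"
      by (rule ennreal_sum_le)
    also have "\<dots> \<le> (\<Sum>h\<in>?I. (\<Sum>p\<in>Bf h (c h \<omega>). ennreal (\<omega> h p)))"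
    proof (rule sum_mono)
      fix h assume h: "h \<in> ?I"
      have fin: "finite (Bf h (c h \<omega>))" by (rule finite_subset[OF Bsub finite_grid_X])
      show "ennreal (\<omega> h (grid_traj n \<pi> \<omega> (h - 1), \<pi> h (grid_traj n \<pi> \<omega> (h - 1)) \<omega>))
          \<le> (\<Sum>p\<in>Bf h (c h \<omega>). ennreal (\<omega> h p))"
        by (rule member_le_sum[OF mem[OF h w] _ fin]) simp
    qed
    finally show "ennreal (\<Sum>h\<in>?I. \<omega> h (grid_traj n \<pi> \<omega> (h - 1), \<pi> h (grid_traj n \<pi> \<omega> (h - 1)) \<omega>))
       \<le> (\<Sum>h\<in>?I. (\<Sum>p\<in>Bf h (c h \<omega>). ennreal (\<omega> h p)))" .
  qed
  also have "\<dots> = (\<Sum>h\<in>?I. (\<integral>\<^sup>+\<omega>. (\<Sum>p\<in>Bf h (c h \<omega>). ennreal (\<omega> h p)) \<partial>rew_seq n \<mu>))"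
    by (rule nn_integral_sum) (rule G_meas[OF \<mu> _ c Bsub], auto)
  also have "\<dots> = (\<Sum>h\<in>?I. (\<integral>\<^sup>+\<omega>. of_nat (card (Bf h (c h \<omega>))) \<partial>rew_seq n \<mu>))"
    by (rule sum.cong[OF refl]) (rule fub[OF \<mu> _ c dep Bsub], auto)
  also have "\<dots> \<le> (\<Sum>h\<in>?I. (\<integral>\<^sup>+\<omega>. of_nat K \<partial>rew_seq n \<mu>))"
    by (intro sum_mono nn_integral_mono) (simp add: Bcard)
  also have "\<dots> = of_nat (K * horizon n)"
    by (simp add: P.emeasure_space_1 mult.commute)
  finally show ?thesis .
qed

lemma traj_valid:
  assumes "2 \<le> n" "h \<in> {1..horizon n}"
  shows "(grid_traj n \<pi> \<omega> (h - 1), a) \<in> grid_X n \<and>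
    fst (grid_traj n \<pi> \<omega> (h - 1)) + snd (grid_traj n \<pi> \<omega> (h - 1)) = h + 1"
proof -
  have "h - 1 \<le> 2 * n - 2" using assms unfolding horizon_def by auto
  from traj_inv[OF _ this, of \<pi> \<omega>] assms(1) assms(2) show ?thesis
    by (cases "grid_traj n \<pi> \<omega> (h - 1)") (auto simp: grid_X_def)
qed

lemma VL_le:
  assumes n: "2 \<le> n" and \<mu>: "\<mu> \<in> reward_dists n (\<lambda>_ _ _. 1)" and L: "1 \<le> L"
    and pol: "\<pi> \<in> lookahead_policies n L \<mu>"
  shows "policy_value n \<mu> \<pi> \<le> of_nat (2 * L * horizon n)"
proof (rule value_le[OF \<mu>])
  let ?I = "{1..horizon n}"
  define c where "c h \<omega> = grid_traj n \<pi> \<omega> (h - L)" for h \<omega>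
  define Bf where "Bf h v = {p \<in> grid_X n. fst (fst p) \<in> {fst v..fst v + (L - 1)} \<and> fst (fst p) + snd (fst p) = h + 1}"
    for h and v :: "nat \<times> nat"
  show "c h \<in> measurable (rew_seq n \<mu>) (count_space UNIV)" for h
    unfolding c_def by (rule traj_meas[OF pol])
  show "c h \<omega> = c h \<omega>'" if h: "h \<in> ?I" and w: "\<omega> \<in> space (rew_seq n \<mu>)" "\<omega>' \<in> space (rew_seq n \<mu>)"
    and ag: "\<forall>t\<in>?I - {h}. \<omega> t = \<omega>' t" for h \<omega> \<omega>'
  proof (cases "h \<le> L")
    case True then show ?thesis by (simp add: c_def)
  next
    case False
    show ?thesis unfolding c_def
      by (rule traj_dep[OF pol w]) (use ag False in auto)
  qed
  show "Bf h v \<subseteq> grid_X n" for h v unfolding Bf_def by auto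
  show "card (Bf h v) \<le> 2 * L" for h v
  proof -
    have "Bf h v \<subseteq> (\<lambda>(i, a). ((i, h + 1 - i), a)) ` ({fst v..fst v + (L - 1)} \<times> UNIV)"
      unfolding Bf_def by (auto simp: image_iff)
    then have "card (Bf h v) \<le> card ((\<lambda>(i, a). ((i, h + 1 - i), a)) ` ({fst v..fst v + (L - 1)} \<times> (UNIV :: act set)))"
      by (rule card_mono[rotated]) (simp add: UNIV_act)
    also have "\<dots> \<le> card ({fst v..fst v + (L - 1)} \<times> (UNIV :: act set))" by (rule card_image_le) (simp add: UNIV_act)
    also have "\<dots> = L * 2" using L by (simp add: card_cartesian_product UNIV_act)
    finally show ?thesis by simp
  qed
  show "(grid_traj n \<pi> \<omega> (h - 1), \<pi> h (grid_traj n \<pi> \<omega> (h - 1)) \<omega>) \<in> Bf h (c h \<omega>)"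
    if h: "h \<in> ?I" and w: "\<omega> \<in> space (rew_seq n \<mu>)" for h \<omega>
  proof -
    have v: "(grid_traj n \<pi> \<omega> (h - 1), \<pi> h (grid_traj n \<pi> \<omega> (h - 1)) \<omega>) \<in> grid_X n \<and>
      fst (grid_traj n \<pi> \<omega> (h - 1)) + snd (grid_traj n \<pi> \<omega> (h - 1)) = h + 1"
      by (rule traj_valid[OF n h])
    have eq: "h - 1 = (h - L) + (h - 1 - (h - L))" using h L by auto
    have m: "fst (grid_traj n \<pi> \<omega> (h - L)) \<le> fst (grid_traj n \<pi> \<omega> (h - 1)) \<and>
        fst (grid_traj n \<pi> \<omega> (h - 1)) \<le> fst (grid_traj n \<pi> \<omega> (h - L)) + (h - 1 - (h - L))"
      using traj_col_mono[of n \<pi> \<omega> "h - L" "h - 1 - (h - L)"] eq by metis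
    have "h - 1 - (h - L) \<le> L - 1" by auto
    then show ?thesis using v m unfolding Bf_def c_def by auto
  qed
qed

lemma V0_le:
  assumes n: "2 \<le> n" and \<mu>: "\<mu> \<in> reward_dists n (\<lambda>_ _ _. 1)"
    and pol: "\<pi> \<in> lookahead_policies n 0 \<mu>"
  shows "policy_value n \<mu> \<pi> \<le> of_nat (1 * horizon n)"
proof -
  interpret P: prob_space "rew_seq n \<mu>" by (rule rs_prob[OF \<mu>])
  obtain \<omega>0 where w0: "\<omega>0 \<in> space (rew_seq n \<mu>)" using P.not_empty by auto
  let ?I = "{1..horizon n}"
  define c where "c h \<omega> = grid_traj n \<pi> \<omega> (h - 1)" for h \<omega>
  define Bf where "Bf h v = {(v, \<pi> h v \<omega>0)} \<inter> grid_X n" for h and v :: "nat \<times> nat"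
  show ?thesis
  proof (rule value_le[OF \<mu>])
    show "c h \<in> measurable (rew_seq n \<mu>) (count_space UNIV)" for h
      unfolding c_def by (rule traj_meas[OF pol])
    show "c h \<omega> = c h \<omega>'" if h: "h \<in> ?I" and w: "\<omega> \<in> space (rew_seq n \<mu>)" "\<omega>' \<in> space (rew_seq n \<mu>)"
      and ag: "\<forall>t\<in>?I - {h}. \<omega> t = \<omega>' t" for h \<omega> \<omega>'
      unfolding c_def by (rule traj_dep[OF pol w]) (use ag in auto)
    show "Bf h v \<subseteq> grid_X n" for h v unfolding Bf_def by auto
    show "card (Bf h v) \<le> 1" for h v unfolding Bf_def by (simp add: card_le_Suc0_iff_eq)
    show "(grid_traj n \<pi> \<omega> (h - 1), \<pi> h (grid_traj n \<pi> \<omega> (h - 1)) \<omega>) \<in> Bf h (c h \<omega>)"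
      if h: "h \<in> ?I" and w: "\<omega> \<in> space (rew_seq n \<mu>)" for h \<omega>
    proof -
      have "\<pi> h (grid_traj n \<pi> \<omega> (h - 1)) \<omega> = \<pi> h (grid_traj n \<pi> \<omega> (h - 1)) \<omega>0"
        by (rule pol_dep[OF pol w w0]) (use h in auto)
      then show ?thesis using traj_valid[OF n h] unfolding Bf_def c_def by auto
    qed
  qed
qed

lemma traj_const: "grid_traj n (\<lambda>_ _ _. a) \<omega> k = grid_traj n (\<lambda>_ _ _. a) \<omega>' k"
  by (induction k) simp_all

lemma AE_nonneg_all:
  assumes \<mu>: "\<mu> \<in> reward_dists n r"
  shows "AE \<omega> in rew_seq n \<mu>. \<forall>h\<in>{1..horizon n}. \<forall>x\<in>grid_X n. 0 \<le> \<omega> h x"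
proof (rule AE_finite_allI)
  fix h assume h: "h \<in> {1..horizon n}"
  show "AE \<omega> in rew_seq n \<mu>. \<forall>x\<in>grid_X n. 0 \<le> \<omega> h x"
    unfolding rew_seq_def
    by (rule AE_PiM_component[where P="\<lambda>f. \<forall>x\<in>grid_X n. 0 \<le> f x"])
       (use h in \<open>auto intro: rd_prob[OF \<mu>] rd_AE[OF \<mu> h]\<close>)
qed simp

lemma V0_pol_eq:
  assumes n: "2 \<le> n" and \<mu>: "\<mu> \<in> reward_dists n (\<lambda>_ _ _. 1)"
  shows "policy_value n \<mu> (\<lambda>_ _ _. Right) = of_nat (horizon n)"
proof -
  let ?I = "{1..horizon n}"
  let ?\<pi> = "(\<lambda>_ _ _. Right) :: policy"
  interpret P: prob_space "rew_seq n \<mu>" by (rule rs_prob[OF \<mu>])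
  define p where "p h = (grid_traj n ?\<pi> (\<lambda>_. undefined) (h - 1), Right)" for h
  have pX: "p h \<in> grid_X n" if "h \<in> ?I" for h
    unfolding p_def by (rule conjunct1[OF traj_valid[OF n that]])
  have "policy_value n \<mu> ?\<pi> = (\<integral>\<^sup>+\<omega>. ennreal (\<Sum>h\<in>?I. \<omega> h (p h)) \<partial>rew_seq n \<mu>)"
    unfolding policy_value_def p_def
  proof (rule nn_integral_cong)
    fix \<omega> :: rseq
    have e: "\<And>k. grid_traj n ?\<pi> \<omega> k = grid_traj n ?\<pi> (\<lambda>_. undefined) k" by (rule traj_const)
    show "ennreal (\<Sum>h\<in>?I. \<omega> h (grid_traj n ?\<pi> \<omega> (h - 1), ?\<pi> h (grid_traj n ?\<pi> \<omega> (h - 1)) \<omega>)) =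
       ennreal (\<Sum>h\<in>?I. \<omega> h (grid_traj n ?\<pi> (\<lambda>_. undefined) (h - 1), Right))"
      by (simp only: e)
  qed
  also have "\<dots> = (\<integral>\<^sup>+\<omega>. (\<Sum>h\<in>?I. ennreal (\<omega> h (p h))) \<partial>rew_seq n \<mu>)"
  proof (rule nn_integral_cong_AE)
    show "AE \<omega> in rew_seq n \<mu>. ennreal (\<Sum>h\<in>?I. \<omega> h (p h)) = (\<Sum>h\<in>?I. ennreal (\<omega> h (p h)))"
      using AE_nonneg_all[OF \<mu>] by eventually_elim (subst sum_ennreal, auto simp: pX)
  qed
  also have "\<dots> = (\<Sum>h\<in>?I. (\<integral>\<^sup>+\<omega>. ennreal (\<omega> h (p h)) \<partial>rew_seq n \<mu>))"
    by (rule nn_integral_sum) (auto intro!: measurable_compose[OF rs_coord_meas[OF \<mu>] measurable_ennreal] pX)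
  also have "\<dots> = (\<Sum>h\<in>?I. 1)"
  proof (rule sum.cong[OF refl])
    fix h assume h: "h \<in> ?I"
    have "(\<integral>\<^sup>+\<omega>. (\<Sum>q\<in>(\<lambda>_. {p h}) ((\<lambda>_. (0::nat)) \<omega>). ennreal (\<omega> h q)) \<partial>rew_seq n \<mu>)
       = (\<integral>\<^sup>+\<omega>. of_nat (card ((\<lambda>_. {p h}) ((\<lambda>_. (0::nat)) \<omega>))) \<partial>rew_seq n \<mu>)"
      apply (rule fub[where c="\<lambda>_. (0::nat)" and Bf="\<lambda>_. {p h}", OF \<mu> h])
        apply (rule measurable_const, simp)
       apply simp
      apply (simp add: pX[OF h])
      done
    then show "(\<integral>\<^sup>+\<omega>. ennreal (\<omega> h (p h)) \<partial>rew_seq n \<mu>) = 1"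
      by (simp add: P.emeasure_space_1)
  qed
  finally show ?thesis by simp
qed

lemma const_pol: "(\<lambda>_ _ _. a) \<in> lookahead_policies n L \<mu>"
  unfolding lookahead_policies_def by auto

lemma V0_eq:
  assumes n: "2 \<le> n" and \<mu>: "\<mu> \<in> reward_dists n (\<lambda>_ _ _. 1)"
  shows "opt_value n 0 \<mu> = of_nat (horizon n)"
proof (rule antisym)
  show "opt_value n 0 \<mu> \<le> of_nat (horizon n)"
    unfolding opt_value_def using V0_le[OF n \<mu>] by (auto intro!: SUP_least)
  show "of_nat (horizon n) \<le> opt_value n 0 \<mu>"
    unfolding opt_value_def using V0_pol_eq[OF n \<mu>, symmetric] const_pol
    by (metis SUP_upper)
qed

lemma VL_opt_le:
  assumes n: "2 \<le> n" and \<mu>: "\<mu> \<in> reward_dists n (\<lambda>_ _ _. 1)" and L: "1 \<le> L"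
  shows "opt_value n L \<mu> \<le> of_nat (2 * L * horizon n)"
  unfolding opt_value_def using VL_le[OF n \<mu> L] by (auto intro!: SUP_least)

lemma opt_mono0: "opt_value n 0 \<mu> \<le> opt_value n L \<mu>"
proof -
  have "lookahead_policies n 0 \<mu> \<subseteq> lookahead_policies n L \<mu>"
  proof
    fix \<pi> assume p: "\<pi> \<in> lookahead_policies n 0 \<mu>"
    show "\<pi> \<in> lookahead_policies n L \<mu>"
      unfolding lookahead_policies_def
    proof (intro CollectI allI conjI ballI impI)
      fix h s show "\<pi> h s \<in> measurable (rew_seq n \<mu>) (count_space UNIV)" by (rule pol_meas[OF p])
      fix \<omega> \<omega>' assume w: "\<omega> \<in> space (rew_seq n \<mu>)" "\<omega>' \<in> space (rew_seq n \<mu>)"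
        and ag: "\<forall>t\<in>{h..min (h + L - 1) (horizon n)}. \<omega> t = \<omega>' t"
      show "\<pi> h s \<omega> = \<pi> h s \<omega>'"
        by (rule pol_dep[OF p w]) (use ag in auto)
    qed
  qed
  then show ?thesis unfolding opt_value_def by (rule SUP_subset_mono) simp
qed

lemma lower_bound:
  assumes n: "2 \<le> n" and L: "L \<in> {1..horizon n}"
  shows "ennreal ((1/2) / real L) \<le> grid_CR n L (\<lambda>_ _ _. 1)"
  unfolding grid_CR_def
proof (rule INF_greatest)
  fix \<mu> assume \<mu>: "\<mu> \<in> reward_dists n (\<lambda>_ _ _. 1)"
  have L1: "1 \<le> L" using L by auto
  have H: "1 \<le> horizon n" using n by (simp add: horizon_def)
  obtain v where v: "opt_value n L \<mu> = ennreal v" "0 \<le> v" "v \<le> real (2 * L * horizon n)"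
  proof -
    have le: "opt_value n L \<mu> \<le> ennreal (real (2 * L * horizon n))"
      using VL_opt_le[OF n \<mu> L1] by (simp add: ennreal_of_nat_eq_real_of_nat)
    then have "opt_value n L \<mu> < top" using le_less_trans by fastforce
    then obtain v where "opt_value n L \<mu> = ennreal v" "0 \<le> v" by (cases "opt_value n L \<mu>") auto
    with le show ?thesis using that by (auto simp: ennreal_le_iff)
  qed
  show "ennreal ((1/2) / real L) \<le> cr_div (opt_value n 0 \<mu>) (opt_value n L \<mu>)"
  proof (cases "v = 0")
    case True then show ?thesis using v by (simp add: cr_div_def)
  next
    case False
    then have vpos: "0 < v" using v by auto
    have "cr_div (opt_value n 0 \<mu>) (opt_value n L \<mu>) = ennreal (real (horizon n) / v)"
      using vpos v by (simp add: cr_div_def V0_eq[OF n \<mu>] ennreal_of_nat_eq_real_of_nat divide_ennreal)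
    moreover have "(1/2) / real L \<le> real (horizon n) / v"
    proof -
      have "(1/2) / real L = real (horizon n) / (real (2 * L * horizon n))"
        using H L1 by (simp add: field_simps)
      also have "\<dots> \<le> real (horizon n) / v"
        using vpos v(3) by (intro divide_left_mono) auto
      finally show ?thesis .
    qed
    ultimately show ?thesis by (simp add: ennreal_leI)
  qed
qed

definition Bn :: "nat \<Rightarrow> nat \<Rightarrow> nat" where "Bn n w = (n - 1) div (2 * w)"
definition blk :: "nat \<Rightarrow> nat \<Rightarrow> nat" where "blk w h = (h - 1) div (4 * w)"
definition rm :: "nat \<Rightarrow> nat \<Rightarrow> nat" where "rm w h = (h - 1) mod (4 * w)"
definition kb :: "nat \<Rightarrow> nat \<Rightarrow> nat" where "kb w h = 1 + 2 * w * blk w h"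
definition isJ :: "nat \<Rightarrow> nat \<Rightarrow> nat \<Rightarrow> bool" where
  "isJ n w h = (1 \<le> h \<and> blk w h < Bn n w \<and> w \<le> rm w h \<and> rm w h < 2 * w)"
definition jq :: "nat \<Rightarrow> nat \<Rightarrow> nat \<Rightarrow> nat \<Rightarrow> (nat \<times> nat) \<times> act" where
  "jq n w h e = ((kb w h + e, h + 1 - (kb w h + e)), Right)"
definition inS :: "nat \<Rightarrow> nat \<Rightarrow> nat \<Rightarrow> (nat \<times> nat) \<times> act \<Rightarrow> bool" where
  "inS n w h p = (isJ n w h \<and> fst (fst p) \<in> {kb w h..<kb w h + w} \<and> fst (fst p) + snd (fst p) = h + 1)"
definition vec :: "nat \<Rightarrow> nat \<Rightarrow> nat \<Rightarrow> nat \<times> nat \<Rightarrow> ((nat \<times> nat) \<times> act) \<Rightarrow> real" where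
  "vec n w h u = restrict (\<lambda>p. if inS n w h p then (if fst u = 1 \<and> fst (fst p) = kb w h + snd u - 1
       then real (w * w) else 0) else 1) (grid_X n)"
definition Uw :: "nat \<Rightarrow> (nat \<times> nat) set" where "Uw w = {1..w} \<times> {1..w}"
definition muC :: "nat \<Rightarrow> nat \<Rightarrow> nat \<Rightarrow> (((nat \<times> nat) \<times> act) \<Rightarrow> real) measure" where
  "muC n w h = distr (measure_pmf (pmf_of_set (Uw w))) (rew_space n) (vec n w h)"

definition stp :: "nat \<Rightarrow> nat \<Rightarrow> nat \<Rightarrow> nat" where "stp w h d = 4 * w * blk w h + d + 1"
definition Sset :: "nat \<Rightarrow> nat \<Rightarrow> (nat \<times> nat) set" where
  "Sset w h = {(d, e). rm w h < d \<and> w \<le> d \<and> d < 2 * w \<and> e < w}"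
definition Jp :: "nat \<Rightarrow> nat \<Rightarrow> nat \<Rightarrow> nat \<times> nat \<Rightarrow> rseq \<Rightarrow> bool" where
  "Jp n w h de \<omega> = (0 < \<omega> (stp w h (fst de)) (jq n w (stp w h (fst de)) (snd de)))"
definition jv :: "nat \<Rightarrow> nat \<Rightarrow> nat \<Rightarrow> rseq \<Rightarrow> nat \<times> nat \<Rightarrow> bool" where
  "jv n w h \<omega> = (\<lambda>de. de \<in> Sset w h \<and> Jp n w h de \<omega>)"
definition TG :: "nat \<Rightarrow> nat \<Rightarrow> (nat \<times> nat \<Rightarrow> bool) \<Rightarrow> nat" where
  "TG w h v = (if \<exists>d e. v (d, e) then kb w h + (LEAST e. v (LEAST d. \<exists>e. v (d, e), e)) else kb w h + 2 * w)"
definition piC :: "nat \<Rightarrow> nat \<Rightarrow> policy" where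
  "piC n w h s \<omega> = (if h = 0 \<or> \<not> blk w h < Bn n w then Right
      else if fst s < TG w h (jv n w h \<omega>) then Right else Up)"

lemma finite_Uw[simp]: "finite (Uw w)" by (simp add: Uw_def)
lemma Uw_ne: "1 \<le> w \<Longrightarrow> Uw w \<noteq> {}" by (auto simp: Uw_def)
lemma card_Uw: "card (Uw w) = w * w" by (simp add: Uw_def card_cartesian_product)

lemma space_rew_space: "space (rew_space n) = (\<Pi>\<^sub>E p\<in>grid_X n. UNIV)"
  by (simp add: rew_space_def space_PiM)

lemma vec_space: "vec n w h u \<in> space (rew_space n)"
  by (simp add: space_rew_space vec_def)

lemma coord_meas_rs: "p \<in> grid_X n \<Longrightarrow> (\<lambda>f. f p) \<in> borel_measurable (rew_space n)"
  unfolding rew_space_def by (rule measurable_component_singleton)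

lemma vec_meas: "vec n w h \<in> measurable (measure_pmf (pmf_of_set (Uw w))) (rew_space n)"
  using vec_space by simp

lemma muC_prob: "1 \<le> w \<Longrightarrow> prob_space (muC n w h)"
  unfolding muC_def by (rule prob_space.prob_space_distr[OF prob_space_measure_pmf vec_meas])

lemma nonneg_sets: "{f \<in> space (rew_space n). \<forall>x\<in>grid_X n. 0 \<le> f x} \<in> sets (rew_space n)"
proof -
  have "Measurable.pred (rew_space n) (\<lambda>f. \<forall>x\<in>grid_X n. 0 \<le> f x)"
  proof (rule pred_intros_finite(3)[OF finite_grid_X])
    fix x assume x: "x \<in> grid_X n"
    show "Measurable.pred (rew_space n) (\<lambda>f. 0 \<le> f x)"
      using pred_sets2[OF _ coord_meas_rs[OF x], of "{0..}"] by simp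
  qed
  then show ?thesis unfolding pred_def .
qed

lemma vec_sum:
  assumes w: "1 \<le> w" and p: "p \<in> grid_X n"
  shows "(\<Sum>u\<in>Uw w. vec n w h u p) = real (w * w)"
proof (cases "inS n w h p")
  case True
  define i where "i = fst (fst p)"
  have i: "kb w h \<le> i" "i < kb w h + w" using True by (auto simp: inS_def i_def)
  have "(\<Sum>u\<in>Uw w. vec n w h u p) = (\<Sum>u\<in>Uw w. if u = (1, i + 1 - kb w h) then real (w * w) else 0)"
  proof (rule sum.cong[OF refl])
    fix u assume u: "u \<in> Uw w"
    then have "1 \<le> snd u" by (auto simp: Uw_def)
    then have "(fst u = 1 \<and> i = kb w h + snd u - 1) = (u = (1, i + 1 - kb w h))"
      using i by (cases u) auto
    then show "vec n w h u p = (if u = (1, i + 1 - kb w h) then real (w * w) else 0)"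
      using True p by (simp add: vec_def i_def)
  qed
  also have "\<dots> = real (w * w)"
    using i by (simp add: Uw_def) (use i in presburger)
  finally show ?thesis .
next
  case False
  then show ?thesis using p by (simp add: vec_def card_Uw)
qed

lemma muC_rd:
  assumes w: "1 \<le> w"
  shows "muC n w \<in> reward_dists n (\<lambda>_ _ _. 1)"
  unfolding reward_dists_def
proof (intro CollectI ballI conjI allI impI)
  fix h assume h: "h \<in> {1..horizon n}"
  show "prob_space (muC n w h)" by (rule muC_prob[OF w])
  show "sets (muC n w h) = sets (rew_space n)" by (simp add: muC_def)
  show "AE f in muC n w h. \<forall>x\<in>grid_X n. 0 \<le> f x"
    unfolding muC_def
    by (subst AE_distr_iff[OF vec_meas nonneg_sets])
       (auto simp: AE_measure_pmf_iff vec_def)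
  fix s a assume sa: "(s, a) \<in> grid_X n"
  have m: "(\<lambda>f. f (s, a)) \<in> borel_measurable (rew_space n)" by (rule coord_meas_rs[OF sa])
  show "integrable (muC n w h) (\<lambda>f. f (s, a))"
    unfolding muC_def
    by (subst integrable_distr_eq[OF vec_meas m]) (simp add: integrable_measure_pmf_finite Uw_ne[OF w])
  show "(\<integral>f. f (s, a) \<partial>muC n w h) = 1"
    unfolding muC_def
    using integral_distr[OF vec_meas m] vec_sum[OF w sa] w
    by (simp add: integral_pmf_of_set Uw_ne card_Uw)
qed

lemma fin_bool_meas:
  assumes "finite S" "\<And>i. i \<in> S \<Longrightarrow> Measurable.pred M (g i)"
  shows "(\<lambda>\<omega>. F (\<lambda>i. i \<in> S \<and> g i \<omega>)) \<in> measurable M (count_space UNIV)"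
  using assms
proof (induction S arbitrary: F rule: finite_induct)
  case empty then show ?case by simp
next
  case (insert x S)
  have m1: "(\<lambda>\<omega>. (\<lambda>v. F (v(x := True))) (\<lambda>i. i \<in> S \<and> g i \<omega>)) \<in> measurable M (count_space UNIV)"
    using insert.IH[of "\<lambda>v. F (v(x := True))"] insert.prems by auto
  have m2: "(\<lambda>\<omega>. F (\<lambda>i. i \<in> S \<and> g i \<omega>)) \<in> measurable M (count_space UNIV)"
    using insert.IH[of F] insert.prems by auto
  have px: "{\<omega> \<in> space M. g x \<omega>} \<in> sets M" using insert.prems[of x] unfolding pred_def by simp
  have eq: "(\<lambda>\<omega>. F (\<lambda>i. i \<in> insert x S \<and> g i \<omega>)) =
     (\<lambda>\<omega>. if g x \<omega> then (\<lambda>v. F (v(x := True))) (\<lambda>i. i \<in> S \<and> g i \<omega>) else F (\<lambda>i. i \<in> S \<and> g i \<omega>))"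
  proof (rule ext)
    fix \<omega>
    show "F (\<lambda>i. i \<in> insert x S \<and> g i \<omega>) =
      (if g x \<omega> then (\<lambda>v. F (v(x := True))) (\<lambda>i. i \<in> S \<and> g i \<omega>) else F (\<lambda>i. i \<in> S \<and> g i \<omega>))"
      using insert.hyps(2) by (cases "g x \<omega>") (auto intro!: arg_cong[where f=F] simp: fun_eq_iff)
  qed
  show ?case unfolding eq by (rule measurable_If[OF m1 m2 px])
qed

lemma arith_blk:
  assumes w: "1 \<le> w" and h: "1 \<le> h"
  shows "h = 4 * w * blk w h + rm w h + 1" "rm w h < 4 * w"
  using w h unfolding blk_def rm_def
  by (metis Suc_eq_plus1 le_add_diff_inverse2 mult_div_mod_eq add.commute, simp)

lemma blk_stp: "1 \<le> w \<Longrightarrow> d < 4 * w \<Longrightarrow> blk w (stp w h d) = blk w h"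
  unfolding blk_def stp_def by simp

lemma rm_stp: "1 \<le> w \<Longrightarrow> d < 4 * w \<Longrightarrow> rm w (stp w h d) = d"
  unfolding rm_def stp_def by simp

lemma kb_stp: "1 \<le> w \<Longrightarrow> d < 4 * w \<Longrightarrow> kb w (stp w h d) = kb w h"
  unfolding kb_def using blk_stp by simp

lemma Bn_le: "1 \<le> w \<Longrightarrow> b < Bn n w \<Longrightarrow> 2 * w * (b + 1) \<le> n - 1"
proof -
  assume w: "1 \<le> w" and b: "b < Bn n w"
  then have "Suc b \<le> (n - 1) div (2 * w)" by (simp add: Bn_def)
  then have "Suc b * (2 * w) \<le> (n - 1) div (2 * w) * (2 * w)" by (rule mult_right_mono) simp
  also have "\<dots> \<le> n - 1" by (rule div_times_less_eq_dividend)
  finally show ?thesis by (simp add: algebra_simps)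
qed

lemma stp_facts:
  assumes n: "2 \<le> n" and w: "1 \<le> w" and h: "1 \<le> h" and b: "blk w h < Bn n w"
    and de: "(d, e) \<in> Sset w h"
  shows "stp w h d \<in> {1..horizon n}" "jq n w (stp w h d) e \<in> grid_X n"
    "h < stp w h d" "stp w h d \<le> h + 2 * w - 1"
proof -
  have d: "rm w h < d" "w \<le> d" "d < 2 * w" "e < w" using de by (auto simp: Sset_def)
  have hh: "h = 4 * w * blk w h + rm w h + 1" using arith_blk[OF w h] by simp
  have B: "2 * w * (blk w h + 1) \<le> n - 1" by (rule Bn_le[OF w b])
  have k: "kb w (stp w h d) = 1 + 2 * w * blk w h" using kb_stp[OF w, of d h] d by (simp add: kb_def)
  show "stp w h d \<in> {1..horizon n}" using B d n unfolding stp_def horizon_def by (auto simp: algebra_simps)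
  show "jq n w (stp w h d) e \<in> grid_X n"
    using B d n k unfolding jq_def grid_X_def stp_def by (auto simp: algebra_simps)
  show "h < stp w h d" using hh d unfolding stp_def by linarith
  show "stp w h d \<le> h + 2 * w - 1" using hh d unfolding stp_def by linarith
qed

lemma finite_Sset: "finite (Sset w h)"
proof -
  have "Sset w h \<subseteq> {..<2 * w} \<times> {..<w}" by (auto simp: Sset_def)
  then show ?thesis by (rule finite_subset) simp
qed

lemma piC_meas:
  assumes n: "2 \<le> n" and w: "1 \<le> w"
  shows "piC n w h s \<in> measurable (rew_seq n (muC n w)) (count_space UNIV)"
proof (cases "h = 0 \<or> \<not> blk w h < Bn n w")
  case True
  then show ?thesis unfolding piC_def by (simp add: measurable_const)
next
  case False
  then have h: "1 \<le> h" and b: "blk w h < Bn n w" by auto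
  have eq: "piC n w h s = (\<lambda>\<omega>. (\<lambda>v. if fst s < TG w h v then Right else Up) (\<lambda>de. de \<in> Sset w h \<and> Jp n w h de \<omega>))"
    using False by (simp add: piC_def jv_def fun_eq_iff)
  show ?thesis unfolding eq
  proof (rule fin_bool_meas[OF finite_Sset])
    fix de assume de: "de \<in> Sset w h"
    obtain d e where de': "de = (d, e)" by (cases de)
    have t: "stp w h d \<in> {1..horizon n}" and q: "jq n w (stp w h d) e \<in> grid_X n"
      using stp_facts[OF n w h b de[unfolded de']] by auto
    show "Measurable.pred (rew_seq n (muC n w)) (Jp n w h de)"
      unfolding Jp_def de' fst_conv snd_conv
      using pred_sets2[OF _ rs_coord_meas[OF muC_rd[OF w] t q], of "{0<..}"] by simp
  qed
qed

lemma piC_pol: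
  assumes n: "2 \<le> n" and w: "1 \<le> w" and L: "4 * w + 1 \<le> L"
  shows "piC n w \<in> lookahead_policies n L (muC n w)"
  unfolding lookahead_policies_def
proof (intro CollectI allI conjI ballI impI)
  fix h s
  show "piC n w h s \<in> measurable (rew_seq n (muC n w)) (count_space UNIV)" by (rule piC_meas[OF n w])
  fix \<omega> \<omega>' :: rseq
  assume "\<omega> \<in> space (rew_seq n (muC n w))" "\<omega>' \<in> space (rew_seq n (muC n w))"
    and ag: "\<forall>t\<in>{h..min (h + L - 1) (horizon n)}. \<omega> t = \<omega>' t"
  show "piC n w h s \<omega> = piC n w h s \<omega>'"
  proof (cases "h = 0 \<or> \<not> blk w h < Bn n w")
    case True then show ?thesis by (simp add: piC_def)
  next
    case False
    then have h: "1 \<le> h" and b: "blk w h < Bn n w" by auto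
    have "jv n w h \<omega> = jv n w h \<omega>'"
    proof (rule ext)
      fix de
      show "jv n w h \<omega> de = jv n w h \<omega>' de"
      proof (cases "de \<in> Sset w h")
        case True
        obtain d e where de': "de = (d, e)" by (cases de)
        note f = stp_facts[OF n w h b True[unfolded de']]
        have "stp w h d \<in> {h..min (h + L - 1) (horizon n)}" using f L by auto
        then have "\<omega> (stp w h d) = \<omega>' (stp w h d)" using ag by blast
        then show ?thesis by (simp add: jv_def Jp_def de')
      qed (simp add: jv_def)
    qed
    then show ?thesis by (simp add: piC_def)
  qed
qed

lemma TG_cases: "TG w h v = kb w h + 2 * w \<or> (\<exists>d e. v (d, e) \<and> TG w h v = kb w h + e)"
proof (cases "\<exists>d e. v (d, e)")
  case True
  define d0 where "d0 = (LEAST d. \<exists>e. v (d, e))"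
  have "\<exists>e. v (d0, e)" unfolding d0_def using True by (rule LeastI_ex)
  then have "v (d0, LEAST e. v (d0, e))" by (rule LeastI_ex)
  then show ?thesis using True by (auto simp: TG_def d0_def)
qed (simp add: TG_def)

lemma TG_eq:
  assumes "v (d1, e1)" "\<And>d e. v (d, e) \<Longrightarrow> d1 \<le> d" "\<And>e. v (d1, e) \<Longrightarrow> e = e1"
  shows "TG w h v = kb w h + e1"
proof -
  have "(LEAST d. \<exists>e. v (d, e)) = d1"
  proof (rule Least_equality)
    show "\<exists>e. v (d1, e)" using assms(1) by (rule exI)
    show "d1 \<le> y" if "\<exists>e. v (y, e)" for y using that assms(2) by (elim exE)
  qed
  moreover have "(LEAST e. v (d1, e)) = e1"
  proof (rule Least_equality)
    show "v (d1, e1)" by (rule assms(1))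
    show "e1 \<le> y" if "v (d1, y)" for y using assms(3)[OF that] by simp
  qed
  ultimately show ?thesis using assms(1) by (auto simp: TG_def)
qed

lemma step_dyn:
  assumes n: "2 \<le> n" and w: "1 \<le> w" and h: "1 \<le> h" and b: "blk w h < Bn n w"
    and ij: "kb w h \<le> i" "i \<le> kb w h + 2 * w" "kb w h \<le> j" "j \<le> kb w h + 2 * w" "i + j = h + 1"
  shows "grid_step n (i, j) (piC n w h (i, j) \<omega>) =
          (if i < TG w h (jv n w h \<omega>) then (Suc i, j) else (i, Suc j))
    \<and> (i < TG w h (jv n w h \<omega>) \<longrightarrow> Suc i \<le> kb w h + 2 * w)
    \<and> (\<not> i < TG w h (jv n w h \<omega>) \<longrightarrow> Suc j \<le> kb w h + 2 * w)"
proof -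
  define x where "x = TG w h (jv n w h \<omega>)"
  define z where "z = 2 * w * blk w h"
  define r where "r = rm w h"
  have hh: "h = 2 * z + r + 1" using arith_blk[OF w h] by (simp add: z_def r_def)
  have rr: "r < 4 * w" using arith_blk[OF w h] by (simp add: r_def)
  have k: "kb w h = 1 + z" by (simp add: kb_def z_def)
  have B: "z + 2 * w \<le> n - 1" using Bn_le[OF w b] by (simp add: z_def algebra_simps)
  have c1: "i < x \<longrightarrow> Suc i \<le> kb w h + 2 * w"
    using TG_cases[of w h "jv n w h \<omega>"] unfolding x_def[symmetric]
    by (auto simp: jv_def Sset_def)
  have c2: "\<not> i < x \<longrightarrow> Suc j \<le> kb w h + 2 * w"
  proof
    assume nx: "\<not> i < x"
    from TG_cases[of w h "jv n w h \<omega>"] show "Suc j \<le> kb w h + 2 * w"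
    proof
      assume "TG w h (jv n w h \<omega>) = kb w h + 2 * w"
      then show ?thesis using nx ij hh rr k unfolding x_def by linarith
    next
      assume "\<exists>d e. jv n w h \<omega> (d, e) \<and> TG w h (jv n w h \<omega>) = kb w h + e"
      then obtain d e where "(d, e) \<in> Sset w h" "x = kb w h + e" by (auto simp: jv_def x_def)
      then have "r < d" "d < 2 * w" by (auto simp: Sset_def r_def)
      then show ?thesis using nx ij hh k \<open>x = kb w h + e\<close> by linarith
    qed
  qed
  have pi: "piC n w h (i, j) \<omega> = (if i < x then Right else Up)"
    using h b by (simp add: piC_def x_def)
  have "grid_step n (i, j) (piC n w h (i, j) \<omega>) = (if i < x then (Suc i, j) else (i, Suc j))"
  proof (cases "i < x")
    case True
    then have "i < n" using c1 B k n by linarith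
    then show ?thesis using True pi ij B k by (auto simp: grid_step_def)
  next
    case False
    then have "j < n" using c2 B k n by linarith
    then show ?thesis using False pi ij B k by (auto simp: grid_step_def)
  qed
  then show ?thesis using c1 c2 by (simp add: x_def)
qed

abbreviation "trC n w \<omega> \<equiv> grid_traj n (piC n w) \<omega>"

lemma blk_h: "1 \<le> w \<Longrightarrow> r < 4 * w \<Longrightarrow> blk w (4 * w * b + r + 1) = b"
  unfolding blk_def by simp
lemma rm_h: "1 \<le> w \<Longrightarrow> r < 4 * w \<Longrightarrow> rm w (4 * w * b + r + 1) = r"
  unfolding rm_def by simp
lemma kb_h: "1 \<le> w \<Longrightarrow> r < 4 * w \<Longrightarrow> kb w (4 * w * b + r + 1) = 1 + 2 * w * b"
  unfolding kb_def using blk_h by simp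

lemma blk_walk:
  assumes n: "2 \<le> n" and w: "1 \<le> w" and b: "b < Bn n w"
    and c: "trC n w \<omega> (4 * w * b) = (1 + 2 * w * b, 1 + 2 * w * b)"
  shows "r \<le> 4 * w \<Longrightarrow> 1 + 2 * w * b \<le> fst (trC n w \<omega> (4 * w * b + r)) \<and>
     fst (trC n w \<omega> (4 * w * b + r)) \<le> 1 + 2 * w * b + 2 * w \<and>
     1 + 2 * w * b \<le> snd (trC n w \<omega> (4 * w * b + r)) \<and>
     snd (trC n w \<omega> (4 * w * b + r)) \<le> 1 + 2 * w * b + 2 * w \<and>
     fst (trC n w \<omega> (4 * w * b + r)) + snd (trC n w \<omega> (4 * w * b + r)) = 4 * w * b + r + 2"
proof (induction r)
  case 0 then show ?case using c by simp
next
  case (Suc r)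
  then have r: "r < 4 * w" by simp
  obtain i j where ij: "trC n w \<omega> (4 * w * b + r) = (i, j)" by (cases "trC n w \<omega> (4 * w * b + r)")
  have IH: "1 + 2 * w * b \<le> i" "i \<le> 1 + 2 * w * b + 2 * w" "1 + 2 * w * b \<le> j" "j \<le> 1 + 2 * w * b + 2 * w"
     "i + j = 4 * w * b + r + 2" using Suc ij by auto
  have hb: "blk w (4 * w * b + r + 1) < Bn n w" using blk_h[OF w r] b by simp
  note sd = step_dyn[OF n w _ hb, of i j \<omega>, unfolded kb_h[OF w r]]
  have "trC n w \<omega> (4 * w * b + Suc r) = grid_step n (i, j) (piC n w (4 * w * b + r + 1) (i, j) \<omega>)"
    using ij by simp
  then show ?case using sd IH by (auto split: if_splits)
qed

lemma corner:
  assumes n: "2 \<le> n" and w: "1 \<le> w"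
  shows "b \<le> Bn n w \<Longrightarrow> trC n w \<omega> (4 * w * b) = (1 + 2 * w * b, 1 + 2 * w * b)"
proof (induction b)
  case 0 then show ?case by simp
next
  case (Suc b)
  then have b: "b < Bn n w" by simp
  note bw = blk_walk[OF n w b Suc.IH[OF less_imp_le[OF b]], of "4 * w", OF order.refl]
  have e: "4 * w * b + 4 * w = 4 * w * Suc b" by simp
  show ?case using bw unfolding e by (cases "trC n w \<omega> (4 * w * Suc b)") (auto simp: algebra_simps)
qed

lemma collect:
  assumes n: "2 \<le> n" and w: "1 \<le> w" and b: "b < Bn n w"
    and d1: "w \<le> d1" "d1 < 2 * w" and e1: "e1 < w"
    and Z: "\<And>d e. d \<in> {w..<d1} \<Longrightarrow> e < w \<Longrightarrow>
          \<omega> (4 * w * b + d + 1) (jq n w (4 * w * b + d + 1) e) \<le> 0"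
    and J1: "0 < \<omega> (4 * w * b + d1 + 1) (jq n w (4 * w * b + d1 + 1) e1)"
    and J2: "\<And>e. e < w \<Longrightarrow> e \<noteq> e1 \<Longrightarrow> \<omega> (4 * w * b + d1 + 1) (jq n w (4 * w * b + d1 + 1) e) \<le> 0"
  shows "trC n w \<omega> (4 * w * b + d1) = fst (jq n w (4 * w * b + d1 + 1) e1)"
proof -
  define k where "k = 1 + 2 * w * b"
  have walk: "r \<le> d1 \<Longrightarrow> trC n w \<omega> (4 * w * b + r) = (k + min r e1, k + r - min r e1)" for r
  proof (induction r)
    case 0 then show ?case using corner[OF n w, of b \<omega>] b by (simp add: k_def)
  next
    case (Suc r)
    then have r: "r < d1" by simp
    have r4: "r < 4 * w" using r d1 by simp
    define h where "h = 4 * w * b + r + 1"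
    have hb: "blk w h < Bn n w" using blk_h[OF w r4] b by (simp add: h_def)
    have kh: "kb w h = k" using kb_h[OF w r4] by (simp add: h_def k_def)
    have rmh: "rm w h = r" using rm_h[OF w r4] by (simp add: h_def)
    have stp: "stp w h d = 4 * w * b + d + 1" for d using blk_h[OF w r4] by (simp add: stp_def h_def)
    have TGe: "TG w h (jv n w h \<omega>) = k + e1"
    proof -
      have "TG w h (jv n w h \<omega>) = kb w h + e1"
      proof (rule TG_eq)
        show "jv n w h \<omega> (d1, e1)"
          using r d1 e1 J1 by (simp add: jv_def Sset_def Jp_def rmh stp)
        show "d1 \<le> d" if "jv n w h \<omega> (d, e)" for d e
        proof (rule ccontr)
          assume "\<not> d1 \<le> d"
          moreover have "w \<le> d" "e < w" "0 < \<omega> (4 * w * b + d + 1) (jq n w (4 * w * b + d + 1) e)"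
            using that by (auto simp: jv_def Sset_def Jp_def stp)
          ultimately show False using Z[of d e] by force
        qed
        show "e = e1" if "jv n w h \<omega> (d1, e)" for e
        proof (rule ccontr)
          assume "e \<noteq> e1"
          moreover have "e < w" "0 < \<omega> (4 * w * b + d1 + 1) (jq n w (4 * w * b + d1 + 1) e)"
            using that by (auto simp: jv_def Sset_def Jp_def stp)
          ultimately show False using J2[of e] by force
        qed
      qed
      then show ?thesis using kh by simp
    qed
    have IH: "trC n w \<omega> (4 * w * b + r) = (k + min r e1, k + r - min r e1)" using Suc r by simp
    have sd: "grid_step n (k + min r e1, k + r - min r e1) (piC n w h (k + min r e1, k + r - min r e1) \<omega>) =
       (if k + min r e1 < k + e1 then (Suc (k + min r e1), k + r - min r e1) else (k + min r e1, Suc (k + r - min r e1)))"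
      using step_dyn[OF n w _ hb, of "k + min r e1" "k + r - min r e1" \<omega>] kh TGe r d1 e1
      by (simp add: h_def k_def algebra_simps)
    have "trC n w \<omega> (4 * w * b + Suc r) = grid_step n (k + min r e1, k + r - min r e1) (piC n w h (k + min r e1, k + r - min r e1) \<omega>)"
      using IH by (simp add: h_def)
    then show ?case using sd by auto
  qed
  have "trC n w \<omega> (4 * w * b + d1) = (k + e1, k + d1 - e1)" using walk[of d1] d1 e1 by simp
  moreover have "kb w (4 * w * b + d1 + 1) = k" using kb_h[of w d1 b] w d1 by (simp add: k_def)
  ultimately show ?thesis using d1 e1 by (simp add: jq_def k_def algebra_simps)
qed

definition Zs :: "nat \<Rightarrow> nat \<Rightarrow> nat \<Rightarrow> (((nat \<times> nat) \<times> act) \<Rightarrow> real) set" where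
  "Zs n w t = {f \<in> space (rew_space n). \<forall>e\<in>{..<w}. f (jq n w t e) \<le> 0}"
definition Js :: "nat \<Rightarrow> nat \<Rightarrow> nat \<Rightarrow> nat \<Rightarrow> (((nat \<times> nat) \<times> act) \<Rightarrow> real) set" where
  "Js n w t e1 = {f \<in> space (rew_space n). f (jq n w t e1) = real (w * w) \<and>
      f (fst (jq n w t e1), Up) = real (w * w) \<and> (\<forall>e\<in>{..<w}. e \<noteq> e1 \<longrightarrow> f (jq n w t e) \<le> 0)}"
definition tS :: "nat \<Rightarrow> nat \<Rightarrow> nat \<Rightarrow> nat" where "tS w b d = 4 * w * b + d + 1"
definition Ev :: "nat \<Rightarrow> nat \<Rightarrow> nat \<Rightarrow> nat \<Rightarrow> nat \<Rightarrow> rseq set" where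
  "Ev n w b d1 e1 = Pi\<^sub>E {1..horizon n} (\<lambda>t. if t \<in> tS w b ` {w..<d1} then Zs n w t
      else if t = tS w b d1 then Js n w t e1 else space (muC n w t))"

lemma tS_facts:
  assumes n: "2 \<le> n" and w: "1 \<le> w" and b: "b < Bn n w" and dw: "w \<le> d" and d: "d < 2 * w" and e: "e < w"
  shows "tS w b d \<in> {1..horizon n}" "jq n w (tS w b d) e \<in> grid_X n"
    "(fst (jq n w (tS w b d) e), Up) \<in> grid_X n"
    "isJ n w (tS w b d)" "kb w (tS w b d) = 1 + 2 * w * b"
proof -
  have B: "2 * w * (b + 1) \<le> n - 1" by (rule Bn_le[OF w b])
  have d4: "d < 4 * w" using d by simp
  have k: "kb w (tS w b d) = 1 + 2 * w * b" using kb_h[OF w d4] by (simp add: tS_def)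
  then show "kb w (tS w b d) = 1 + 2 * w * b" .
  show "tS w b d \<in> {1..horizon n}" using B d n unfolding tS_def horizon_def by (auto simp: algebra_simps)
  show "jq n w (tS w b d) e \<in> grid_X n"
    using B d dw e n k unfolding jq_def grid_X_def tS_def by (auto simp: algebra_simps)
  then show "(fst (jq n w (tS w b d) e), Up) \<in> grid_X n" by (simp add: grid_X_def jq_def)
  show "isJ n w (tS w b d)"
    using blk_h[OF w d4] rm_h[OF w d4] b dw d by (simp add: isJ_def tS_def)
qed

lemma vec_jq:
  assumes n: "2 \<le> n" and w: "1 \<le> w" and b: "b < Bn n w" and d: "w \<le> d" "d < 2 * w" and e: "e < w"
    and u: "u \<in> Uw w" and a: "a = Right \<or> a = Up"
  shows "vec n w (tS w b d) u (fst (jq n w (tS w b d) e), a) = (if u = (1, e + 1) then real (w * w) else 0)"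
proof -
  note f = tS_facts[OF n w b d e]
  have mem: "(fst (jq n w (tS w b d) e), a) \<in> grid_X n" using f(2,3) a by (auto simp: jq_def)
  have inS: "inS n w (tS w b d) (fst (jq n w (tS w b d) e), a)"
    using f(4) f(5) e d unfolding inS_def jq_def by (auto simp: tS_def)
  have "1 \<le> snd u" using u by (auto simp: Uw_def)
  then have "(fst u = 1 \<and> kb w (tS w b d) + e = kb w (tS w b d) + snd u - 1) = (u = (1, e + 1))"
    by (cases u) auto
  then show ?thesis using mem inS by (simp add: vec_def jq_def)
qed

lemma sets_le0: "p \<in> grid_X n \<Longrightarrow> Measurable.pred (rew_space n) (\<lambda>f. f p \<le> c)"
  using pred_sets2[OF _ coord_meas_rs, of "{..c}"] by simp
lemma sets_eqc: "p \<in> grid_X n \<Longrightarrow> Measurable.pred (rew_space n) (\<lambda>f. f p = c)"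
  using pred_sets2[OF _ coord_meas_rs, of "{c}"] by simp

lemma Zs_sets:
  assumes n: "2 \<le> n" and w: "1 \<le> w" and b: "b < Bn n w" and dw: "w \<le> d" and d: "d < 2 * w"
  shows "Zs n w (tS w b d) \<in> sets (rew_space n)"
proof -
  have "Measurable.pred (rew_space n) (\<lambda>f. \<forall>e\<in>{..<w}. f (jq n w (tS w b d) e) \<le> 0)"
    by (rule pred_intros_finite(3)) (auto intro!: sets_le0 tS_facts[OF n w b dw d])
  then show ?thesis unfolding Zs_def pred_def .
qed

lemma Js_sets:
  assumes n: "2 \<le> n" and w: "1 \<le> w" and b: "b < Bn n w" and dw: "w \<le> d" and d: "d < 2 * w" and e1: "e1 < w"
  shows "Js n w (tS w b d) e1 \<in> sets (rew_space n)"
proof -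
  let ?t = "tS w b d"
  have p1: "Measurable.pred (rew_space n) (\<lambda>f. f (jq n w ?t e1) = real (w * w))"
    by (rule sets_eqc) (rule tS_facts[OF n w b dw d e1])
  have p2: "Measurable.pred (rew_space n) (\<lambda>f. f (fst (jq n w ?t e1), Up) = real (w * w))"
    by (rule sets_eqc) (rule tS_facts[OF n w b dw d e1])
  have p3: "Measurable.pred (rew_space n) (\<lambda>f. \<forall>e\<in>{..<w}. e \<noteq> e1 \<longrightarrow> f (jq n w ?t e) \<le> 0)"
  proof (rule pred_intros_finite(3))
    fix e assume "e \<in> {..<w}"
    then have "jq n w ?t e \<in> grid_X n" using tS_facts[OF n w b dw d] by auto
    then show "Measurable.pred (rew_space n) (\<lambda>f. e \<noteq> e1 \<longrightarrow> f (jq n w ?t e) \<le> 0)"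
      by (cases "e = e1") (auto intro: sets_le0)
  qed simp
  have "Measurable.pred (rew_space n) (\<lambda>f. f (jq n w ?t e1) = real (w * w) \<and>
      f (fst (jq n w ?t e1), Up) = real (w * w) \<and> (\<forall>e\<in>{..<w}. e \<noteq> e1 \<longrightarrow> f (jq n w ?t e) \<le> 0))"
    using p1 p2 p3 by measurable
  then show ?thesis unfolding Js_def pred_def .
qed

lemma emeasure_muC:
  assumes w: "1 \<le> w" and A: "A \<in> sets (rew_space n)"
  shows "emeasure (muC n w t) A = ennreal (real (card (Uw w \<inter> {u. vec n w t u \<in> A})) / real (w * w))"
proof -
  have "emeasure (muC n w t) A = emeasure (measure_pmf (pmf_of_set (Uw w))) (vec n w t -` A \<inter> space (measure_pmf (pmf_of_set (Uw w))))"
    unfolding muC_def by (rule emeasure_distr[OF vec_meas A])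
  also have "\<dots> = ennreal (real (card (Uw w \<inter> {u. vec n w t u \<in> A})) / real (w * w))"
    using Uw_ne[OF w] by (simp add: emeasure_pmf_of_set card_Uw vimage_def)
  finally show ?thesis .
qed

lemma em_Zs:
  assumes n: "2 \<le> n" and w: "1 \<le> w" and b: "b < Bn n w" and d: "w \<le> d" "d < 2 * w"
  shows "emeasure (muC n w (tS w b d)) (Zs n w (tS w b d)) = ennreal (real (w - 1) / real w)"
proof -
  have "Uw w \<inter> {u. vec n w (tS w b d) u \<in> Zs n w (tS w b d)} = {2..w} \<times> {1..w}"
  proof (intro set_eqI iffI)
    fix u assume u: "u \<in> Uw w \<inter> {u. vec n w (tS w b d) u \<in> Zs n w (tS w b d)}"
    then have uU: "u \<in> Uw w" by simp
    show "u \<in> {2..w} \<times> {1..w}"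
    proof (rule ccontr)
      assume "u \<notin> {2..w} \<times> {1..w}"
      then have "fst u = 1" using uU by (auto simp: Uw_def)
      then have e: "u = (1, (snd u - 1) + 1)" "snd u - 1 < w" using uU by (cases u; auto simp: Uw_def)+
      have "vec n w (tS w b d) u (jq n w (tS w b d) (snd u - 1)) = real (w * w)"
        using vec_jq[OF n w b d e(2) uU, of Right] e(1) by (simp add: jq_def)
      moreover have "vec n w (tS w b d) u (jq n w (tS w b d) (snd u - 1)) \<le> 0"
        using u e(2) by (auto simp: Zs_def)
      moreover have "0 < real (w * w)" using w by simp
      ultimately show False by linarith
    qed
  next
    fix u assume u: "u \<in> {2..w} \<times> {1..w}"
    then have uU: "u \<in> Uw w" by (auto simp: Uw_def)
    have "vec n w (tS w b d) u (jq n w (tS w b d) e) \<le> 0" if "e < w" for e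
      using vec_jq[OF n w b d that uU, of Right] u by (auto simp: jq_def)
    then show "u \<in> Uw w \<inter> {u. vec n w (tS w b d) u \<in> Zs n w (tS w b d)}"
      using uU by (simp add: Zs_def vec_space)
  qed
  moreover have "card ({2..w} \<times> {1..w}) = (w - 1) * w" by (simp add: card_cartesian_product)
  ultimately show ?thesis
    using emeasure_muC[OF w Zs_sets[OF n w b d]] w by (simp add: field_simps)
qed

lemma em_Js:
  assumes n: "2 \<le> n" and w: "1 \<le> w" and b: "b < Bn n w" and d: "w \<le> d" "d < 2 * w" and e1: "e1 < w"
  shows "emeasure (muC n w (tS w b d)) (Js n w (tS w b d) e1) = ennreal (1 / real (w * w))"
proof -
  have "Uw w \<inter> {u. vec n w (tS w b d) u \<in> Js n w (tS w b d) e1} = {(1, e1 + 1)}"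
  proof (intro set_eqI iffI)
    fix u assume u: "u \<in> Uw w \<inter> {u. vec n w (tS w b d) u \<in> Js n w (tS w b d) e1}"
    then have uU: "u \<in> Uw w" by simp
    have "vec n w (tS w b d) u (jq n w (tS w b d) e1) = real (w * w)" using u by (simp add: Js_def)
    then show "u \<in> {(1, e1 + 1)}" using vec_jq[OF n w b d e1 uU, of Right] w
      by (simp add: jq_def split: if_splits)
  next
    fix u :: "nat \<times> nat" assume u: "u \<in> {(1, e1 + 1)}"
    then have uU: "u \<in> Uw w" using e1 by (auto simp: Uw_def)
    have a: "vec n w (tS w b d) u (jq n w (tS w b d) e1) = real (w * w)"
      using vec_jq[OF n w b d e1 uU, of Right] u by (simp add: jq_def)
    have c: "vec n w (tS w b d) u (fst (jq n w (tS w b d) e1), Up) = real (w * w)"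
      using vec_jq[OF n w b d e1 uU, of Up] u by simp
    have z: "vec n w (tS w b d) u (jq n w (tS w b d) e) \<le> 0" if "e < w" "e \<noteq> e1" for e
      using vec_jq[OF n w b d that(1) uU, of Right] u that by (auto simp: jq_def)
    show "u \<in> Uw w \<inter> {u. vec n w (tS w b d) u \<in> Js n w (tS w b d) e1}"
      using uU a c z by (simp add: Js_def vec_space)
  qed
  then show ?thesis
    using emeasure_muC[OF w Js_sets[OF n w b d e1]] by simp
qed

lemma tS_inj: "inj_on (\<lambda>(b, d). tS w b d) ({..<B} \<times> {..<4 * w})"
proof (rule inj_onI, clarsimp)
  fix b d b' d' assume "b < B" "d < 4 * w" "b' < B" "d' < 4 * w" and e: "tS w b d = tS w b' d'"
  then have "(4 * w * b + d) div (4 * w) = (4 * w * b' + d') div (4 * w)"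
    "(4 * w * b + d) mod (4 * w) = (4 * w * b' + d') mod (4 * w)" by (simp_all add: tS_def)
  then show "b = b' \<and> d = d'" using \<open>d < 4 * w\<close> \<open>d' < 4 * w\<close> by simp
qed

lemma tS_inj1: "inj_on (tS w b) UNIV"
  by (rule inj_onI) (simp add: tS_def)

lemma em_Ev:
  assumes n: "2 \<le> n" and w: "1 \<le> w" and b: "b < Bn n w" and d1: "w \<le> d1" "d1 < 2 * w" and e1: "e1 < w"
  shows "emeasure (rew_seq n (muC n w)) (Ev n w b d1 e1) =
    ennreal ((real (w - 1) / real w) ^ (d1 - w) / real (w * w))"
proof -
  let ?I = "{1..horizon n}"
  let ?Z = "tS w b ` {w..<d1}"
  let ?t1 = "tS w b d1"
  let ?q = "real (w - 1) / real w"
  interpret P: product_sigma_finite "muC n w"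
    by (rule product_sigma_finite.intro) (rule prob_space_imp_sigma_finite[OF muC_prob[OF w]])
  define A where "A t = (if t \<in> ?Z then Zs n w t else if t = ?t1 then Js n w t e1 else space (muC n w t))" for t
  define g where "g t = (if t \<in> ?Z then ?q else if t = ?t1 then 1 / real (w * w) else 1)" for t
  have Zsub: "?Z \<subseteq> ?I" using tS_facts(1)[OF n w b _ _ e1] d1 by auto
  have t1I: "?t1 \<in> ?I" using tS_facts(1)[OF n w b d1 e1] .
  have t1Z: "?t1 \<notin> ?Z" using inj_onD[OF tS_inj1[of w b]] by fastforce
  have A: "A t \<in> sets (muC n w t)" and eA: "emeasure (muC n w t) (A t) = ennreal (g t)" if t: "t \<in> ?I" for t
  proof -
    have s: "sets (muC n w t) = sets (rew_space n)" by (simp add: muC_def)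
    have sp: "space (muC n w t) = space (rew_space n)" by (simp add: muC_def)
    show "A t \<in> sets (muC n w t)"
      using d1 e1 Zs_sets[OF n w b] Js_sets[OF n w b d1 e1] unfolding A_def s sp by (auto intro: sets.top)
    show "emeasure (muC n w t) (A t) = ennreal (g t)"
    proof (cases "t \<in> ?Z")
      case True
      then obtain d where d: "d \<in> {w..<d1}" "t = tS w b d" by auto
      then show ?thesis using em_Zs[OF n w b, of d] d1 True by (auto simp: A_def g_def)
    next
      case False
      then show ?thesis
        using em_Js[OF n w b d1 e1] prob_space.emeasure_space_1[OF muC_prob[OF w]]
        by (auto simp: A_def g_def)
    qed
  qed
  have "emeasure (rew_seq n (muC n w)) (Ev n w b d1 e1) = (\<Prod>t\<in>?I. emeasure (muC n w t) (A t))"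
    unfolding rew_seq_def Ev_def A_def[symmetric] by (rule P.emeasure_PiM) (auto intro: A)
  also have "\<dots> = (\<Prod>t\<in>?I. ennreal (g t))" by (rule prod.cong) (auto simp: eA)
  also have "\<dots> = ennreal (prod g ?I)" by (rule prod_ennreal) (simp add: g_def)
  also have "prod g ?I = prod g (insert ?t1 ?Z)"
    by (rule prod.mono_neutral_right) (use Zsub t1I in \<open>auto simp: g_def\<close>)
  also have "\<dots> = g ?t1 * prod g ?Z" using t1Z by simp
  also have "prod g ?Z = ?q ^ card ?Z" by (simp add: g_def)
  also have "card ?Z = d1 - w" using card_image[OF inj_on_subset[OF tS_inj1[of w b] subset_UNIV]] by simp
  finally show ?thesis using t1Z by (simp add: g_def)
qed

lemma Ev_sets:
  assumes n: "2 \<le> n" and w: "1 \<le> w" and b: "b < Bn n w" and d1: "w \<le> d1" "d1 < 2 * w" and e1: "e1 < w"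
  shows "Ev n w b d1 e1 \<in> sets (rew_seq n (muC n w))"
  unfolding Ev_def rew_seq_def
proof (rule sets_PiM_I_finite)
  fix t assume t: "t \<in> {1..horizon n}"
  have s: "sets (muC n w t) = sets (rew_space n)" by (simp add: muC_def)
  have sp: "space (muC n w t) = space (rew_space n)" by (simp add: muC_def)
  show "(if t \<in> tS w b ` {w..<d1} then Zs n w t else if t = tS w b d1 then Js n w t e1 else space (muC n w t)) \<in> sets (muC n w t)"
    using d1 e1 Zs_sets[OF n w b] Js_sets[OF n w b d1 e1] unfolding s sp by (auto intro: sets.top)
qed simp

abbreviation "fC n w h \<omega> \<equiv> \<omega> h (trC n w \<omega> (h - 1), piC n w h (trC n w \<omega> (h - 1)) \<omega>)"

lemma pbd:
  assumes n: "2 \<le> n" and w: "1 \<le> w" and b: "b < Bn n w" and d: "w \<le> d" "d < 2 * w"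
    and om: "\<omega> \<in> space (rew_seq n (muC n w))"
  shows "(\<Sum>e<w. ennreal (real (w * w)) * indicator (Ev n w b d e) \<omega>) \<le> ennreal (fC n w (tS w b d) \<omega>)"
proof (cases "\<exists>e0<w. \<omega> \<in> Ev n w b d e0")
  case False
  then have "\<forall>e\<in>{..<w}. indicator (Ev n w b d e) \<omega> = (0::ennreal)" by auto
  then show ?thesis by simp
next
  case True
  then obtain e0 where e0: "e0 < w" "\<omega> \<in> Ev n w b d e0" by auto
  let ?t1 = "tS w b d"
  have t1I: "?t1 \<in> {1..horizon n}" using tS_facts(1)[OF n w b d e0(1)] .
  have t1Z: "?t1 \<notin> tS w b ` {w..<d}" using inj_onD[OF tS_inj1[of w b]] by fastforce
  have mem: "\<omega> t \<in> (if t \<in> tS w b ` {w..<d} then Zs n w t else if t = ?t1 then Js n w t e0 else space (muC n w t))"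
    if "t \<in> {1..horizon n}" for t using e0(2) that unfolding Ev_def by (auto simp: PiE_iff)
  have Jt1: "\<omega> ?t1 \<in> Js n w ?t1 e0" using mem[OF t1I] t1Z by simp
  have uniq: "\<omega> \<notin> Ev n w b d e" if "e < w" "e \<noteq> e0" for e
  proof
    assume a: "\<omega> \<in> Ev n w b d e"
    have "\<omega> ?t1 \<in> (\<lambda>t. if t \<in> tS w b ` {w..<d} then Zs n w t else if t = ?t1 then Js n w t e else space (muC n w t)) ?t1"
      using a t1I unfolding Ev_def by (rule PiE_mem)
    then have "\<omega> ?t1 \<in> Js n w ?t1 e" using t1Z by simp
    then have "\<omega> ?t1 (jq n w ?t1 e) = real (w * w)" by (simp add: Js_def)
    moreover have "\<omega> ?t1 (jq n w ?t1 e) \<le> 0" using Jt1 that by (simp add: Js_def)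
    moreover have "0 < real (w * w)" using w by simp
    ultimately show False by linarith
  qed
  have "(\<Sum>e<w. ennreal (real (w * w)) * indicator (Ev n w b d e) \<omega>) =
      (\<Sum>e<w. if e = e0 then ennreal (real (w * w)) else 0)"
    by (rule sum.cong[OF refl]) (use e0 uniq in auto)
  also have "\<dots> = ennreal (real (w * w))" using e0 by simp
  finally have S: "(\<Sum>e<w. ennreal (real (w * w)) * indicator (Ev n w b d e) \<omega>) = ennreal (real (w * w))" .
  have Z: "\<omega> (4 * w * b + d' + 1) (jq n w (4 * w * b + d' + 1) e) \<le> 0" if "d' \<in> {w..<d}" "e < w" for d' e
  proof -
    have "tS w b d' \<in> {1..horizon n}" using tS_facts(1)[OF n w b _ _ that(2)] that d by auto
    then have "\<omega> (tS w b d') \<in> Zs n w (tS w b d')" using mem[of "tS w b d'"] that by auto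
    then show ?thesis using that by (simp add: Zs_def tS_def)
  qed
  have J1: "0 < \<omega> (4 * w * b + d + 1) (jq n w (4 * w * b + d + 1) e0)"
    using Jt1 w by (simp add: Js_def tS_def)
  have J2: "\<omega> (4 * w * b + d + 1) (jq n w (4 * w * b + d + 1) e) \<le> 0" if "e < w" "e \<noteq> e0" for e
    using Jt1 that by (simp add: Js_def tS_def)
  have tr: "trC n w \<omega> (4 * w * b + d) = fst (jq n w (4 * w * b + d + 1) e0)"
    by (rule collect[where \<omega>=\<omega>, OF n w b d e0(1) Z J1 J2])
  have val: "\<omega> ?t1 (fst (jq n w ?t1 e0), a) = real (w * w)" for a
    using Jt1 by (cases a) (auto simp: Js_def jq_def)
  have "fC n w ?t1 \<omega> = real (w * w)"
    using tr val by (simp add: tS_def)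
  then show ?thesis using S by simp
qed

lemma gauss_real: "2 * (\<Sum>i<w. real i) = real w * (real w - 1)"
  by (induction w) (auto simp: algebra_simps)

lemma geo_lb:
  assumes w: "1 \<le> w"
  shows "real w * real w / 2 \<le> (\<Sum>d\<in>{w..<2 * w}. real w * (real (w - 1) / real w) ^ (d - w))"
proof -
  let ?q = "real (w - 1) / real w"
  have q: "?q = 1 + (- 1 / real w)" using w by (simp add: field_simps of_nat_diff)
  have "(\<Sum>d\<in>{w..<2 * w}. real w * ?q ^ (d - w)) = (\<Sum>i\<in>{0..<w}. real w * ?q ^ i)"
  proof -
    have "{w..<2 * w} = {0 + w..<w + w}" by (simp add: mult_2)
    then show ?thesis by (simp only: sum.shift_bounds_nat_ivl) simp
  qed
  also have "\<dots> \<ge> (\<Sum>i\<in>{0..<w}. real w * (1 - real i / real w))"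
  proof (rule sum_mono)
    fix i assume "i \<in> {0..<w}"
    have "1 + real i * (- 1 / real w) \<le> ?q ^ i"
      unfolding q by (rule Bernoulli_inequality) (use w in \<open>simp add: field_simps\<close>)
    then show "real w * (1 - real i / real w) \<le> real w * ?q ^ i" by (intro mult_left_mono) auto
  qed
  also have "(\<Sum>i\<in>{0..<w}. real w * (1 - real i / real w)) = real w * real w - (\<Sum>i<w. real i)"
  proof -
    have "\<And>i. real w * (1 - real i / real w) = real w - real i" using w by (simp add: field_simps)
    then have "(\<Sum>i\<in>{0..<w}. real w * (1 - real i / real w)) = (\<Sum>i\<in>{0..<w}. real w - real i)" by simp
    also have "\<dots> = real w * real w - (\<Sum>i<w. real i)" by (simp add: sum_subtractf atLeast0LessThan)
    finally show ?thesis .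
  qed
  also have "\<dots> = real w * real w / 2 + real w / 2" using gauss_real[of w] by (simp add: field_simps)
  finally show ?thesis by simp
qed

lemma meas_cind:
  assumes [measurable]: "A \<in> sets M"
  shows "(\<lambda>\<omega>. (c::ennreal) * indicator A \<omega>) \<in> borel_measurable M"
  by measurable

lemma val_lb:
  assumes n: "2 \<le> n" and w: "1 \<le> w"
  shows "ennreal (real (Bn n w) * (real w * real w / 2)) \<le> policy_value n (muC n w) (piC n w)"
proof -
  let ?M = "rew_seq n (muC n w)"
  let ?I = "{1..horizon n}"
  let ?q = "real (w - 1) / real w"
  let ?B = "Bn n w"
  define F where "F \<omega> = (\<Sum>b<?B. \<Sum>d\<in>{w..<2 * w}. \<Sum>e<w. ennreal (real (w * w)) * indicator (Ev n w b d e) \<omega>)" for \<omega>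
  have Es: "Ev n w b d e \<in> sets ?M" if "b < ?B" "d \<in> {w..<2 * w}" "e < w" for b d e
    using Ev_sets[OF n w that(1) _ _ that(3)] that(2) by auto
  have "(\<integral>\<^sup>+\<omega>. F \<omega> \<partial>?M) = (\<Sum>b<?B. \<Sum>d\<in>{w..<2 * w}. \<Sum>e<w. ennreal (real (w * w)) * emeasure ?M (Ev n w b d e))"
  proof -
    have m1: "(\<lambda>\<omega>. ennreal (real (w * w)) * indicator (Ev n w b d e) \<omega>) \<in> borel_measurable ?M"
      if "b < ?B" "d \<in> {w..<2 * w}" "e < w" for b d e by (rule meas_cind[OF Es[OF that]])
    have m2: "(\<lambda>\<omega>. \<Sum>e<w. ennreal (real (w * w)) * indicator (Ev n w b d e) \<omega>) \<in> borel_measurable ?M"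
      if "b < ?B" "d \<in> {w..<2 * w}" for b d
      by (rule borel_measurable_sum) (rule m1[OF that], simp)
    have m3: "(\<lambda>\<omega>. \<Sum>d\<in>{w..<2 * w}. \<Sum>e<w. ennreal (real (w * w)) * indicator (Ev n w b d e) \<omega>) \<in> borel_measurable ?M"
      if "b < ?B" for b
      by (rule borel_measurable_sum) (rule m2[OF that], assumption)
    have "(\<integral>\<^sup>+\<omega>. F \<omega> \<partial>?M) = (\<Sum>b<?B. \<integral>\<^sup>+\<omega>. (\<Sum>d\<in>{w..<2 * w}. \<Sum>e<w. ennreal (real (w * w)) * indicator (Ev n w b d e) \<omega>) \<partial>?M)"
      unfolding F_def by (rule nn_integral_sum) (rule m3, simp)
    also have "\<dots> = (\<Sum>b<?B. \<Sum>d\<in>{w..<2 * w}. \<integral>\<^sup>+\<omega>. (\<Sum>e<w. ennreal (real (w * w)) * indicator (Ev n w b d e) \<omega>) \<partial>?M)"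
    proof (rule sum.cong[OF refl])
      fix b assume b: "b \<in> {..<?B}"
      show "(\<integral>\<^sup>+\<omega>. (\<Sum>d\<in>{w..<2 * w}. \<Sum>e<w. ennreal (real (w * w)) * indicator (Ev n w b d e) \<omega>) \<partial>?M) =
        (\<Sum>d\<in>{w..<2 * w}. \<integral>\<^sup>+\<omega>. (\<Sum>e<w. ennreal (real (w * w)) * indicator (Ev n w b d e) \<omega>) \<partial>?M)"
        by (rule nn_integral_sum) (rule m2, use b in simp, assumption)
    qed
    also have "\<dots> = (\<Sum>b<?B. \<Sum>d\<in>{w..<2 * w}. \<Sum>e<w. ennreal (real (w * w)) * emeasure ?M (Ev n w b d e))"
    proof (intro sum.cong refl)
      fix b d assume b: "b \<in> {..<?B}" and d: "d \<in> {w..<2 * w}"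
      have "(\<integral>\<^sup>+\<omega>. (\<Sum>e<w. ennreal (real (w * w)) * indicator (Ev n w b d e) \<omega>) \<partial>?M) =
          (\<Sum>e<w. \<integral>\<^sup>+\<omega>. ennreal (real (w * w)) * indicator (Ev n w b d e) \<omega> \<partial>?M)"
        by (rule nn_integral_sum) (rule m1, use b in simp, rule d, simp)
      also have "\<dots> = (\<Sum>e<w. ennreal (real (w * w)) * emeasure ?M (Ev n w b d e))"
      proof (rule sum.cong[OF refl])
        fix e assume e: "e \<in> {..<w}"
        show "(\<integral>\<^sup>+\<omega>. ennreal (real (w * w)) * indicator (Ev n w b d e) \<omega> \<partial>?M) = ennreal (real (w * w)) * emeasure ?M (Ev n w b d e)"
          using nn_integral_cmult_indicator[OF Es, of b d e] b d e by simp
      qed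
      finally show "(\<integral>\<^sup>+\<omega>. (\<Sum>e<w. ennreal (real (w * w)) * indicator (Ev n w b d e) \<omega>) \<partial>?M) =
          (\<Sum>e<w. ennreal (real (w * w)) * emeasure ?M (Ev n w b d e))" .
    qed
    finally show ?thesis .
  qed
  also have "\<dots> = (\<Sum>b<?B. \<Sum>d\<in>{w..<2 * w}. ennreal (real w * ?q ^ (d - w)))"
  proof (intro sum.cong refl)
    fix b d assume b: "b \<in> {..<?B}" and d: "d \<in> {w..<2 * w}"
    have "(\<Sum>e<w. ennreal (real (w * w)) * emeasure ?M (Ev n w b d e)) =
        (\<Sum>e<w. ennreal (real (w * w)) * ennreal (?q ^ (d - w) / real (w * w)))"
      using em_Ev[OF n w, of b d] b d by (intro sum.cong refl) auto
    also have "\<dots> = (\<Sum>e<w. ennreal (?q ^ (d - w)))"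
      using w by (intro sum.cong refl) (simp add: ennreal_mult[symmetric] del: of_nat_mult)
    also have "\<dots> = ennreal (real w * ?q ^ (d - w))"
      using w by (simp add: ennreal_mult ennreal_of_nat_eq_real_of_nat of_nat_diff)
    finally show "(\<Sum>e<w. ennreal (real (w * w)) * emeasure ?M (Ev n w b d e)) = ennreal (real w * ?q ^ (d - w))" .
  qed
  also have "\<dots> = ennreal (real ?B * (\<Sum>d\<in>{w..<2 * w}. real w * ?q ^ (d - w)))"
  proof -
    have qn: "0 \<le> ?q" by simp
    have "(\<Sum>d\<in>{w..<2 * w}. ennreal (real w * ?q ^ (d - w))) = ennreal (\<Sum>d\<in>{w..<2 * w}. real w * ?q ^ (d - w))"
      by (rule sum_ennreal) (use qn in simp)
    moreover have "0 \<le> (\<Sum>d\<in>{w..<2 * w}. real w * ?q ^ (d - w))"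
      by (rule sum_nonneg) (use qn in simp)
    ultimately show ?thesis by (simp add: ennreal_of_nat_eq_real_of_nat ennreal_mult)
  qed
  finally have intF: "(\<integral>\<^sup>+\<omega>. F \<omega> \<partial>?M) = ennreal (real ?B * (\<Sum>d\<in>{w..<2 * w}. real w * ?q ^ (d - w)))" .
  have ge: "ennreal (real ?B * (real w * real w / 2)) \<le> (\<integral>\<^sup>+\<omega>. F \<omega> \<partial>?M)"
    unfolding intF by (intro ennreal_leI mult_left_mono geo_lb[OF w]) auto
  have "(\<integral>\<^sup>+\<omega>. F \<omega> \<partial>?M) \<le> policy_value n (muC n w) (piC n w)"
    unfolding policy_value_def
  proof (rule nn_integral_mono_AE)
    show "AE \<omega> in ?M. F \<omega> \<le> ennreal (\<Sum>h\<in>?I. fC n w h \<omega>)"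
      using AE_nonneg_all[OF muC_rd[OF w]] AE_space
    proof eventually_elim
      case (elim \<omega>)
      have nn: "0 \<le> fC n w h \<omega>" if "h \<in> ?I" for h
        using elim(1) traj_valid[OF n that] that by blast
      let ?T = "(\<lambda>(b, d). tS w b d) ` ({..<?B} \<times> {w..<2 * w})"
      have w0: "0 < w" using w by simp
      have TI: "?T \<subseteq> ?I" using tS_facts(1)[OF n w _ _ _ w0] by auto
      have inj: "inj_on (\<lambda>(b, d). tS w b d) ({..<?B} \<times> {w..<2 * w})"
        by (rule inj_on_subset[OF tS_inj]) auto
      have "F \<omega> \<le> (\<Sum>b<?B. \<Sum>d\<in>{w..<2 * w}. ennreal (fC n w (tS w b d) \<omega>))"
        unfolding F_def by (intro sum_mono pbd[OF n w] elim(2)) auto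
      also have "\<dots> = (\<Sum>(b, d)\<in>{..<?B} \<times> {w..<2 * w}. ennreal (fC n w (tS w b d) \<omega>))"
        by (rule sum.cartesian_product)
      also have "\<dots> = (\<Sum>h\<in>?T. ennreal (fC n w h \<omega>))"
        by (subst sum.reindex[OF inj]) (simp add: case_prod_beta)
      also have "\<dots> \<le> (\<Sum>h\<in>?I. ennreal (fC n w h \<omega>))"
        by (rule sum_mono2[OF _ TI]) auto
      also have "\<dots> = ennreal (\<Sum>h\<in>?I. fC n w h \<omega>)"
        by (rule sum_ennreal) (rule nn)
      finally show ?case .
    qed
  qed
  with ge show ?thesis by (rule order.trans)
qed

lemma cr_le:
  assumes n: "2 \<le> n" and L: "1 \<le> L" and \<mu>: "\<mu> \<in> reward_dists n (\<lambda>_ _ _. 1)"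
    and x: "0 < x" and xle: "ennreal x \<le> opt_value n L \<mu>"
  shows "grid_CR n L (\<lambda>_ _ _. 1) \<le> ennreal (real (horizon n) / x)"
proof -
  have "grid_CR n L (\<lambda>_ _ _. 1) \<le> cr_div (opt_value n 0 \<mu>) (opt_value n L \<mu>)"
    unfolding grid_CR_def by (rule INF_lower[OF \<mu>])
  moreover obtain v where v: "opt_value n L \<mu> = ennreal v" "0 \<le> v"
  proof -
    have le: "opt_value n L \<mu> \<le> ennreal (real (2 * L * horizon n))"
      using VL_opt_le[OF n \<mu> L] by (simp add: ennreal_of_nat_eq_real_of_nat)
    then have "opt_value n L \<mu> < top" using le_less_trans by fastforce
    then show ?thesis using that by (cases "opt_value n L \<mu>") auto
  qed
  moreover have xv: "x \<le> v" using xle v x by (simp add: ennreal_le_iff)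
  moreover have "cr_div (opt_value n 0 \<mu>) (opt_value n L \<mu>) = ennreal (real (horizon n) / v)"
    using v xv x by (simp add: cr_div_def V0_eq[OF n \<mu>] ennreal_of_nat_eq_real_of_nat divide_ennreal)
  moreover have "real (horizon n) / v \<le> real (horizon n) / x"
    using xv x by (intro divide_left_mono) auto
  ultimately show ?thesis by (metis ennreal_leI order.trans)
qed

lemma upper_bound:
  assumes n: "2 \<le> n" and L: "L \<in> {1..horizon n}"
  shows "grid_CR n L (\<lambda>_ _ _. 1) \<le> ennreal (256 / real L)"
proof -
  have L1: "1 \<le> L" and LH: "L \<le> 2 * n - 1" using L by (auto simp: horizon_def)
  have H: "1 \<le> horizon n" using n by (simp add: horizon_def)
  show ?thesis
  proof (cases "L \<le> 4")
    case True
    have \<mu>: "muC n 1 \<in> reward_dists n (\<lambda>_ _ _. 1)" by (rule muC_rd) simp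
    have "ennreal (real (horizon n)) \<le> opt_value n L (muC n 1)"
      using opt_mono0[of n "muC n 1" L] V0_eq[OF n \<mu>] by (simp add: ennreal_of_nat_eq_real_of_nat)
    from cr_le[OF n L1 \<mu> _ this] H
    have "grid_CR n L (\<lambda>_ _ _. 1) \<le> ennreal 1" by simp
    also have "\<dots> \<le> ennreal (256 / real L)" using True L1 by (intro ennreal_leI) (simp add: field_simps)
    finally show ?thesis .
  next
    case False
    define w where "w = (L - 1) div 4"
    have w: "1 \<le> w" using False by (simp add: w_def)
    have w4: "4 * w + 1 \<le> L" "L \<le> 8 * w" using False unfolding w_def by presburger+
    define B where "B = Bn n w"
    have B1: "1 \<le> B"
    proof -
      have "2 * w \<le> n - 1" using w4 LH by linarith
      then show ?thesis using w by (simp add: B_def Bn_def div_greater_zero_iff Suc_le_eq)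
    qed
    have nB: "n \<le> 4 * B * w"
    proof -
      have "n - 1 = B * (2 * w) + (n - 1) mod (2 * w)" unfolding B_def Bn_def by (rule div_mult_mod_eq[symmetric])
      moreover have "(n - 1) mod (2 * w) < 2 * w" using w by simp
      ultimately have "n - 1 < (B + 1) * (2 * w)" by (simp add: algebra_simps)
      moreover have "(B + 1) * (2 * w) \<le> (2 * B) * (2 * w)" using B1 by (intro mult_right_mono) auto
      moreover have "(2 * B) * (2 * w) = 4 * B * w" by simp
      ultimately show ?thesis using n by linarith
    qed
    have \<mu>: "muC n w \<in> reward_dists n (\<lambda>_ _ _. 1)" by (rule muC_rd[OF w])
    have x: "0 < real B * (real w * real w / 2)" using B1 w by simp
    have "ennreal (real B * (real w * real w / 2)) \<le> opt_value n L (muC n w)"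
    proof -
      have "policy_value n (muC n w) (piC n w) \<le> opt_value n L (muC n w)"
        unfolding opt_value_def by (rule SUP_upper[OF piC_pol[OF n w w4(1)]])
      with val_lb[OF n w] show ?thesis unfolding B_def by (rule order.trans)
    qed
    from cr_le[OF n L1 \<mu> x this]
    have "grid_CR n L (\<lambda>_ _ _. 1) \<le> ennreal (real (horizon n) / (real B * (real w * real w / 2)))" .
    also have "\<dots> \<le> ennreal (256 / real L)"
    proof (rule ennreal_leI)
      have "horizon n \<le> 8 * B * w" using nB by (simp add: horizon_def)
      then have "horizon n * L \<le> (8 * B * w) * (8 * w)" using w4(2) by (rule mult_le_mono)
      then have "real (horizon n) * real L \<le> 64 * (real B * real w * real w)"
        by (simp only: of_nat_mult[symmetric] of_nat_le_iff)
      then show "real (horizon n) / (real B * (real w * real w / 2)) \<le> 256 / real L"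
        using x L1 by (simp add: field_simps)
    qed
    finally show ?thesis .
  qed
qed

theorem mainTheorem11:
  shows "\<exists>c1 c2 :: real. c1 > 0 \<and> c2 > 0 \<and>
    (\<forall>n L. 2 \<le> n \<longrightarrow> L \<in> {1..horizon n} \<longrightarrow>
       ennreal (c1 / real L) \<le> grid_CR n L (\<lambda>_ _ _. 1) \<and>
       grid_CR n L (\<lambda>_ _ _. 1) \<le> ennreal (c2 / real L))"
proof -
  have "\<forall>n L. 2 \<le> n \<longrightarrow> L \<in> {1..horizon n} \<longrightarrow>
      ennreal ((1/2) / real L) \<le> grid_CR n L (\<lambda>_ _ _. 1) \<and> grid_CR n L (\<lambda>_ _ _. 1) \<le> ennreal (256 / real L)"
    using lower_bound upper_bound by blast
  then show ?thesis
    apply -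
    apply (rule exI[of _ "1/2::real"], rule exI[of _ "256::real"])
    by simp
qed

end
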